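(* Let $H$ be a real Hilbert space, $I=\{1,\dots,M\}$, let $f_i,h_i,T_i$ ($i\in I$) satisfy Assumption (A1)–(A4) and the parameters satisfy Condition (C) (described below). Consider the sequences generated by the Distributed Accelerated Incremental Algorithm below, and assume that for each $i\in I$ the sequence $\{y^{(i)}_n\}$ is bounded. Then for all $i\in I$: (a) $\lim_{n\to\infty}\|z^{(i)}_n-y^{(i)}_n\|=\lim_{n\to\infty}\|x_n-w^{(i)}_n\|=0$; (b) $\lim_{n\to\infty}\|x_n-z^{(i)}_n\|=\lim_{n\to\infty}\|T_i(x_n)-x_n\|=0$.
   Context: Assumption (A1): each $f_i:H\to\mathbb{R}$ is continuous and convex. (A2): each $h_i:H\to\mathbb{R}$ is convex and Fréchet differentiable, and $\nabla h_i$ is $(1/L_i)$-Lipschitz continuous for some $L_i>0$. (A3): each $T_i:H\to H$ is firmly nonexpansive, i.e. $\|T_ix-T_iy\|^2\le\langle T_ix-T_iy,x-y\rangle$ for all $x,y$. (A4): $S=\bigcap_{i=1}^M\mathrm{Fix}\,T_i\neq\emptyset$ and, with $\psi=\sum_{i=1}^M(f_i+h_i)$, $\Omega=\{\hat x\in S:\psi(\hat x)=\min_{x\in S}\psi(x)\}\neq\emptyset$. Condition (C): $\{\theta_n\},\{\lambda_n\},\{\beta_n\},\{\alpha_n\}$ are decreasing real sequences converging to $0$ with $\theta_n\in[0,1)$, $\lambda_n\in(0,2\min_{i\in I}L_i]$, $\beta_n\in(0,1]$, $\alpha_n\in(0,1]$, and: (C1) $\sum_n\alpha_n=\infty$; (C2)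 $\lim_n\frac{1}{\alpha_{n+1}}\big|\frac{1}{\lambda_{n+1}}-\frac{1}{\lambda_n}\big|=0$; (C3) $\lim_n\frac{1}{\lambda_{n+1}}\big|1-\frac{\alpha_n}{\alpha_{n+1}}\big|=0$; (C4) $\lim_n\frac{\alpha_n}{\lambda_n}=0$; (C5) $\lim_n\frac{\theta_n}{\alpha_{n+1}\lambda_{n+1}}=0$; (C6) $\frac{\lambda_n}{\lambda_{n+1}}\le\sigma$ for some $\sigma\ge1$; (C7) $\lim_n\frac{\beta_n}{\alpha_{n+1}}=0$. $\mathrm{prox}_{\lambda g}(x)=\arg\min_y\{g(y)+\frac{1}{2\lambda}\|x-y\|^2\}$. Distributed Accelerated Incremental Algorithm: choose $x_1\in H$, $w^{(i)}_0,z^{(i)}_0,u^{(i)}\in H$ and set $d^{(i)}_1=-\nabla h_i(z^{(i)}_0)$ ($i\in I$). For $n=1,2,\dots$: set $w^{(1)}_n=x_n$; for $i=1,\dots,M$ compute $z^{(i)}_n=w^{(i)}_n+\theta_n(w^{(i)}_n-w^{(i)}_{n-1})$, $d^{(i)}_{n+1}=-\nabla h_i(z^{(i)}_n)+\beta_nd^{(i)}_n$, $y^{(i)}_n=\mathrm{prox}_{\lambda_nf_i}(z^{(i)}_n+\lambda_nd^{(i)}_{n+1})$, $w^{(i+1)}_n=\alpha_nu^{(i)}+(1-\alpha_n)T_i(y^{(i)}_n)$; then set $x_{n+1}=w^{(M+1)}_n$. *)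

theory Defs
  imports "HOL-Analysis.Analysis"
begin

definition prox :: "real \<Rightarrow> ('a::real_inner \<Rightarrow> real) \<Rightarrow> 'a \<Rightarrow> 'a" where
  "prox lam g x = (THE y. \<forall>v. g y + (1 / (2 * lam)) * (norm (x - y))\<^sup>2
                               \<le> g v + (1 / (2 * lam)) * (norm (x - v))\<^sup>2)"

definition firmly_nonexpansive :: "('a::real_inner \<Rightarrow> 'a) \<Rightarrow> bool" where
  "firmly_nonexpansive T \<longleftrightarrow>
     (\<forall>x y. (norm (T x - T y))\<^sup>2 \<le> inner (T x - T y) (x - y))"

definition Fix :: "('a \<Rightarrow> 'a) \<Rightarrow> 'a set" where
  "Fix T = {x. T x = x}"

end

theory Submission
  imports Defs
begin

lemma path_deriv:
  fixes h :: "'a::real_inner \<Rightarrow> real"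
  assumes "\<And>p. (h has_derivative (\<lambda>v. inner (g p) v)) (at p)"
  shows "((\<lambda>t. h (a + t *\<^sub>R (b - a))) has_real_derivative inner (g (a + t *\<^sub>R (b - a))) (b - a)) (at t within S)"
proof -
  have 1: "((\<lambda>t. a + t *\<^sub>R (b - a)) has_derivative (\<lambda>s. s *\<^sub>R (b - a))) (at t within S)"
    by (auto intro!: derivative_eq_intros)
  have "((\<lambda>t. h (a + t *\<^sub>R (b - a))) has_derivative (\<lambda>s. inner (g (a + t *\<^sub>R (b - a))) (s *\<^sub>R (b - a)))) (at t within S)"
    by (rule has_derivative_compose[OF 1 assms])
  moreover have "(\<lambda>s. inner (g (a + t *\<^sub>R (b - a))) (s *\<^sub>R (b - a))) = (*) (inner (g (a + t *\<^sub>R (b - a))) (b - a))"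
    by (auto simp: fun_eq_iff)
  ultimately show ?thesis by (simp add: has_field_derivative_def)
qed

lemma convex_grad_ineq:
  fixes h :: "'a::real_inner \<Rightarrow> real"
  assumes cv: "convex_on UNIV h" and d: "\<And>p. (h has_derivative (\<lambda>v. inner (g p) v)) (at p)"
  shows "h b \<ge> h a + inner (g a) (b - a)"
proof -
  let ?phi = "\<lambda>t::real. h (a + t *\<^sub>R (b - a))"
  have cphi: "convex_on UNIV ?phi"
  proof (rule convex_onI)
    fix t x y :: real assume t: "0 < t" "t < 1"
    have "a + ((1 - t) * x + t * y) *\<^sub>R (b - a) = (1 - t) *\<^sub>R (a + x *\<^sub>R (b - a)) + t *\<^sub>R (a + y *\<^sub>R (b - a))"
      by (simp add: algebra_simps)
    then show "?phi ((1 - t) *\<^sub>R x + t *\<^sub>R y) \<le> (1 - t) * ?phi x + t * ?phi y"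
      using convex_onD[OF cv, of t "a + x *\<^sub>R (b - a)" "a + y *\<^sub>R (b - a)"] t by simp
  qed simp
  have "?phi 1 - ?phi 0 \<ge> inner (g (a + 0 *\<^sub>R (b - a))) (b - a) * (1 - 0)"
    by (rule convex_on_imp_above_tangent[OF cphi]) (use path_deriv[OF d, of a b 0 UNIV] in auto)
  then show ?thesis by simp
qed

lemma descent_lemma:
  fixes h :: "'a::real_inner \<Rightarrow> real"
  assumes d: "\<And>p. (h has_derivative (\<lambda>v. inner (g p) v)) (at p)"
    and L: "L > 0" and lip: "\<And>p q. norm (g p - g q) \<le> (1 / L) * norm (p - q)"
  shows "h b \<le> h a + inner (g a) (b - a) + (1 / (2 * L)) * (norm (b - a))\<^sup>2"
proof -
  define c where "c = (norm (b - a))\<^sup>2 / (2 * L)"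
  define A where "A = inner (g a) (b - a)"
  define G where "G = (\<lambda>t. h (a + t *\<^sub>R (b - a)) - t * A - t\<^sup>2 * c)"
  have "G 1 \<le> G 0"
  proof (rule DERIV_nonpos_imp_nonincreasing[of 0 1 G])
    fix t :: real assume t: "0 \<le> t" "t \<le> 1"
    have q: "((\<lambda>t. t\<^sup>2 * c) has_real_derivative 2 * t * c) (at t)"
      by (auto intro!: derivative_eq_intros)
    have l: "((\<lambda>t. t * A) has_real_derivative A) (at t)"
      by (auto intro!: derivative_eq_intros)
    have D0: "(G has_real_derivative (inner (g (a + t *\<^sub>R (b - a))) (b - a) - A - 2 * t * c)) (at t)"
      unfolding G_def by (intro DERIV_diff path_deriv[OF d] l q)
    have cc: "2 * t * c = t / L * (norm (b - a))\<^sup>2" unfolding c_def using L by (simp add: field_simps)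
    have D: "(G has_real_derivative (inner (g (a + t *\<^sub>R (b - a))) (b - a) - inner (g a) (b - a) - t / L * (norm (b - a))\<^sup>2)) (at t)"
      using D0 cc unfolding A_def by simp
    have "inner (g (a + t *\<^sub>R (b - a))) (b - a) - inner (g a) (b - a) = inner (g (a + t *\<^sub>R (b - a)) - g a) (b - a)"
      by (simp add: inner_diff_left)
    also have "\<dots> \<le> norm (g (a + t *\<^sub>R (b - a)) - g a) * norm (b - a)"
      by (rule norm_cauchy_schwarz)
    also have "\<dots> \<le> ((1 / L) * norm (t *\<^sub>R (b - a))) * norm (b - a)"
      using lip[of "a + t *\<^sub>R (b - a)" a] by (intro mult_right_mono) auto
    also have "\<dots> = t / L * (norm (b - a))\<^sup>2"
      using t by (simp add: power2_eq_square)
    finally show "\<exists>y. (G has_real_derivative y) (at t) \<and> y \<le> 0"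
      using D by (intro exI[of _ "inner (g (a + t *\<^sub>R (b - a))) (b - a) - inner (g a) (b - a) - t / L * (norm (b - a))\<^sup>2"]) auto
  qed simp
  then show ?thesis unfolding G_def c_def A_def by simp
qed

lemma baillon_haddad:
  fixes h :: "'a::real_inner \<Rightarrow> real"
  assumes cv: "convex_on UNIV h" and d: "\<And>p. (h has_derivative (\<lambda>v. inner (g p) v)) (at p)"
    and L: "L > 0" and lip: "\<And>p q. norm (g p - g q) \<le> (1 / L) * norm (p - q)"
  shows "inner (g x - g y) (x - y) \<ge> L * (norm (g x - g y))\<^sup>2"
proof -
  have key: "h q \<ge> h p + inner (g p) (q - p) + L / 2 * (norm (g p - g q))\<^sup>2" for p q
  proof -
    define w where "w = g q - g p"
    have 1: "h (q - L *\<^sub>R w) \<le> h q + inner (g q) ((q - L *\<^sub>R w) - q) + (1 / (2 * L)) * (norm ((q - L *\<^sub>R w) - q))\<^sup>2"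
      by (rule descent_lemma[OF d L lip])
    have 2: "h (q - L *\<^sub>R w) \<ge> h p + inner (g p) ((q - L *\<^sub>R w) - p)"
      by (rule convex_grad_ineq[OF cv d])
    have 3: "(1 / (2 * L)) * (norm ((q - L *\<^sub>R w) - q))\<^sup>2 = L / 2 * (norm w)\<^sup>2"
      using L by (simp add: power2_eq_square field_simps)
    have 4: "inner (g q) ((q - L *\<^sub>R w) - q) = - L * inner (g q) w" by (simp add: inner_diff_right)
    have 5: "inner (g p) ((q - L *\<^sub>R w) - p) = inner (g p) (q - p) - L * inner (g p) w"
      by (simp add: inner_diff_right)
    have 6: "inner (g q) w - inner (g p) w = inner w w" unfolding w_def by (simp add: inner_diff_left)
    have 7: "(norm (g p - g q))\<^sup>2 = inner w w" "(norm w)\<^sup>2 = inner w w"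
      unfolding w_def by (simp_all only: power2_norm_eq_inner[symmetric] norm_minus_commute)
    show ?thesis using 1 2 3 4 5 6 7 L by (simp add: algebra_simps)
  qed
  have a: "h y \<ge> h x + inner (g x) (y - x) + L / 2 * (norm (g x - g y))\<^sup>2" by (rule key)
  have b: "h x \<ge> h y + inner (g y) (x - y) + L / 2 * (norm (g y - g x))\<^sup>2" by (rule key)
  have c: "norm (g y - g x) = norm (g x - g y)" by (rule norm_minus_commute)
  have e: "inner (g x - g y) (x - y) = - inner (g x) (y - x) - inner (g y) (x - y)"
    by (simp add: inner_diff_left inner_diff_right algebra_simps)
  show ?thesis using a b c e by (simp add: algebra_simps)
qed

lemma norm_diff_scale_sq:
  fixes a b :: "'a::real_inner"
  shows "(norm (a - c *\<^sub>R b))\<^sup>2 = (norm a)\<^sup>2 - 2 * c * inner b a + c\<^sup>2 * (norm b)\<^sup>2"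
  unfolding power2_norm_eq_inner
  by (simp add: inner_diff_left inner_diff_right inner_commute algebra_simps power2_eq_square)

lemma grad_step_nonexp:
  fixes h :: "'a::real_inner \<Rightarrow> real"
  assumes cv: "convex_on UNIV h" and d: "\<And>p. (h has_derivative (\<lambda>v. inner (g p) v)) (at p)"
    and L: "L > 0" and lip: "\<And>p q. norm (g p - g q) \<le> (1 / L) * norm (p - q)"
    and lam: "0 \<le> lam" "lam \<le> 2 * L"
  shows "norm ((x - lam *\<^sub>R g x) - (y - lam *\<^sub>R g y)) \<le> norm (x - y)"
proof -
  let ?D = "x - y" and ?E = "g x - g y"
  have bh: "inner ?E ?D \<ge> L * (norm ?E)\<^sup>2" by (rule baillon_haddad[OF cv d L lip])
  have eq: "(norm ((x - lam *\<^sub>R g x) - (y - lam *\<^sub>R g y)))\<^sup>2 = (norm ?D)\<^sup>2 - 2 * lam * inner ?E ?D + lam\<^sup>2 * (norm ?E)\<^sup>2"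
  proof -
    have "(x - lam *\<^sub>R g x) - (y - lam *\<^sub>R g y) = ?D - lam *\<^sub>R ?E" by (simp add: algebra_simps)
    then show ?thesis by (subst (1) \<open>_ = _\<close>) (rule norm_diff_scale_sq)
  qed
  have "lam\<^sup>2 * (norm ?E)\<^sup>2 \<le> 2 * lam * (L * (norm ?E)\<^sup>2)"
  proof -
    have "lam\<^sup>2 * (norm ?E)\<^sup>2 = lam * (lam * (norm ?E)\<^sup>2)" by (simp add: power2_eq_square)
    also have "\<dots> \<le> lam * (2 * L * (norm ?E)\<^sup>2)"
      using lam by (intro mult_left_mono mult_right_mono) auto
    finally show ?thesis by simp
  qed
  moreover have "2 * lam * (L * (norm ?E)\<^sup>2) \<le> 2 * lam * inner ?E ?D"
    using bh lam by (intro mult_left_mono) auto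
  ultimately have "(norm ((x - lam *\<^sub>R g x) - (y - lam *\<^sub>R g y)))\<^sup>2 \<le> (norm ?D)\<^sup>2"
    using eq by linarith
  then show ?thesis using power2_le_imp_le by fastforce
qed

lemma convex_lower_linear:
  fixes f :: "'a::real_normed_vector \<Rightarrow> real"
  assumes cont: "continuous_on UNIV f" and cv: "convex_on UNIV f"
  shows "\<exists>a b. b \<ge> 0 \<and> (\<forall>q. a - b * norm q \<le> f q)"
proof -
  have "isCont f 0" using cont by (simp add: continuous_on_eq_continuous_at)
  then obtain r where r: "r > 0" "\<And>q. dist q 0 < r \<Longrightarrow> dist (f q) (f 0) < 1"
    unfolding continuous_at_eps_delta by (metis zero_less_one)
  define s where "s = r / 2"
  have s: "s > 0" using r by (simp add: s_def)
  have near: "f q \<ge> f 0 - 1" if "norm q \<le> s" for q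
  proof -
    have "dist q 0 < r" using that s r by (simp add: s_def)
    then have "dist (f q) (f 0) < 1" by (rule r(2))
    then show ?thesis by (simp add: dist_real_def)
  qed
  have "f q \<ge> (f 0 - 1) - (1 / s) * norm q" for q
  proof (cases "norm q \<le> s")
    case True
    have "(1 / s) * norm q \<ge> 0" using s by simp
    then show ?thesis using near[OF True] by linarith
  next
    case False
    define t where "t = s / norm q"
    have nq: "norm q > s" using False by simp
    have nq0: "norm q > 0" using nq s by linarith
    have t: "0 < t" "t < 1" using s nq nq0 by (auto simp: t_def divide_less_eq)
    have "norm (t *\<^sub>R q) = s" using nq s nq0 by (simp add: t_def)
    then have 1: "f (t *\<^sub>R q) \<ge> f 0 - 1" using near by simp
    have 2: "f ((1 - t) *\<^sub>R 0 + t *\<^sub>R q) \<le> (1 - t) * f 0 + t * f q"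
      using t by (intro convex_onD[OF cv]) auto
    from 1 2 have "t * f q \<ge> t * f 0 - 1" by (simp add: algebra_simps)
    then have "f q \<ge> f 0 - 1 / t" using t by (simp add: field_simps)
    moreover have "1 / t = (1 / s) * norm q" using nq s by (simp add: t_def)
    ultimately show ?thesis by simp
  qed
  then show ?thesis using s by (intro exI[of _ "f 0 - 1"] exI[of _ "1 / s"]) auto
qed

lemma mid_norm_sq:
  fixes x a b :: "'a::real_inner"
  shows "(norm (x - ((1/2) *\<^sub>R a + (1/2) *\<^sub>R b)))\<^sup>2 = ((norm (x - a))\<^sup>2 + (norm (x - b))\<^sup>2) / 2 - (norm (a - b))\<^sup>2 / 4"
  unfolding power2_norm_eq_inner
  by (simp add: inner_diff_left inner_diff_right inner_add_left inner_add_right inner_commute field_simps)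

lemma eps_le:
  fixes A B C :: real
  assumes "\<And>t. 0 < t \<Longrightarrow> t \<le> 1 \<Longrightarrow> A \<le> B + t * C" "C \<ge> 0"
  shows "A \<le> B"
proof (rule ccontr)
  assume "\<not> A \<le> B"
  then have AB: "A > B" by simp
  show False
  proof (cases "C = 0")
    case True then show False using assms(1)[of 1] AB by simp
  next
    case False
    then have C: "C > 0" using assms(2) by simp
    define t where "t = min 1 ((A - B) / (2 * C))"
    have t: "0 < t" "t \<le> 1" using AB C by (auto simp: t_def)
    have "t * C \<le> (A - B) / (2 * C) * C" using C by (intro mult_right_mono) (auto simp: t_def)
    also have "\<dots> = (A - B) / 2" using C by simp
    finally show False using assms(1)[OF t] AB by simp
  qed
qed

lemma aux_sub:
  fixes fy fz fq c N0 Nz I N1 t :: real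
  assumes "fy + c * N0 \<le> fz + c * Nz" "fz \<le> (1 - t) * fy + t * fq" "Nz = N0 - 2 * t * I + t\<^sup>2 * N1"
  shows "t * fy \<le> t * ((fq - 2 * c * I) + t * (c * N1))"
proof -
  have e: "c * Nz = c * N0 - 2 * t * c * I + t * (t * (c * N1))" unfolding assms(3) by (simp add: algebra_simps power2_eq_square)
  have e2: "t * ((fq - 2 * c * I) + t * (c * N1)) = t * fq - 2 * t * c * I + t * (t * (c * N1))" by (simp add: algebra_simps)
  have e3: "(1 - t) * fy = fy - t * fy" by (simp add: algebra_simps)
  show ?thesis unfolding e2 using assms(1,2) e e3 by argo
qed
lemma aux_qs:
  fixes a b m e1 e2 :: real
  assumes "a < m + e1" "b < m + e2" shows "(a + b) / 2 - m < (e1 + e2) / 2"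
  using assms by argo
lemma aux_fin:
  fixes m X Y :: real
  assumes "m \<le> X - Y" shows "Y \<le> X - m"
  using assms by argo
lemma aux_uniq:
  fixes a b K :: real
  assumes "a \<le> (a + b) / 2 - K" "b \<le> a" shows "K \<le> 0"
  using assms by argo

lemma aux_avg:
  fixes a b c :: real
  assumes "a \<le> c" "b \<le> c" shows "(a + b) / 2 \<le> c"
  using assms by argo

lemma aux_mid:
  fixes fm fa fb c A B D :: real
  assumes "fm \<le> (fa + fb) / 2"
  shows "fm + c * ((A + B) / 2 - D / 4) \<le> (fa + c * A + (fb + c * B)) / 2 - c / 4 * D"
  using assms by (simp add: field_simps)

context
  fixes f :: "'a::{real_inner,complete_space} \<Rightarrow> real" and lam :: real and x :: 'a
  assumes cont: "continuous_on UNIV f" and cv: "convex_on UNIV f" and lam: "lam > 0"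
begin

definition "PF q = f q + (1 / (2 * lam)) * (norm (x - q))\<^sup>2"

lemma PF_mid: "PF ((1/2) *\<^sub>R a + (1/2) *\<^sub>R b) \<le> (PF a + PF b) / 2 - (1 / (2 * lam)) / 4 * (norm (a - b))\<^sup>2"
proof -
  have "f ((1 - 1/2) *\<^sub>R a + (1/2) *\<^sub>R b) \<le> (1 - 1/2) * f a + (1/2) * f b"
    by (intro convex_onD[OF cv]) auto
  then have "f ((1/2) *\<^sub>R a + (1/2) *\<^sub>R b) \<le> (f a + f b) / 2" by simp
  then show ?thesis unfolding PF_def mid_norm_sq by (rule aux_mid)
qed

lemma PF_cont: "continuous_on UNIV PF"
  unfolding PF_def by (intro continuous_intros cont)

lemma PF_bdd: "bdd_below (range PF)"
proof -
  obtain a b where ab: "b \<ge> 0" "\<And>q. a - b * norm q \<le> f q" using convex_lower_linear[OF cont cv] by blast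
  define c where "c = 1 / (2 * lam)"
  have c: "c > 0" using lam by (simp add: c_def)
  have "PF q \<ge> a - b * norm x - b\<^sup>2 / (4 * c)" for q
  proof -
    define r where "r = norm (x - q)"
    have "norm q \<le> r + norm x" using norm_triangle_ineq2[of q x] by (simp add: norm_minus_commute r_def)
    then have "b * norm q \<le> b * (r + norm x)" using ab(1) by (rule mult_left_mono)
    then have 1: "f q \<ge> a - b * (r + norm x)" using ab(2)[of q] by linarith
    have "0 \<le> (2 * c * r - b)\<^sup>2 / (4 * c)" using c by simp
    moreover have "(2 * c * r - b)\<^sup>2 / (4 * c) = c * r\<^sup>2 - b * r + b\<^sup>2 / (4 * c)"
      using c by (simp add: field_simps power2_eq_square)
    ultimately have "c * r\<^sup>2 - b * r \<ge> - b\<^sup>2 / (4 * c)" by linarith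
    then show ?thesis using 1 unfolding PF_def c_def[symmetric] r_def[symmetric] by (simp add: algebra_simps)
  qed
  then show ?thesis by (intro bdd_belowI2) auto
qed

lemma PF_min_exists: "\<exists>y. \<forall>v. PF y \<le> PF v"
proof -
  define m where "m = Inf (range PF)"
  define c where "c = 1 / (2 * lam)"
  have c: "c > 0" using lam by (simp add: c_def)
  have low: "m \<le> PF q" for q unfolding m_def by (rule cInf_lower[OF _ PF_bdd]) auto
  have "\<exists>q. PF q < m + 1 / (real k + 1)" for k
  proof -
    have "Inf (range PF) < m + 1 / (real k + 1)" unfolding m_def by simp
    then show ?thesis by (subst (asm) cInf_less_iff[OF _ PF_bdd]) auto
  qed
  then have "\<forall>k. \<exists>q. PF q < m + 1 / (real k + 1)" by blast
  from choice[OF this] obtain qs where qs0: "\<forall>k. PF (qs k) < m + 1 / (real k + 1)" by blast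
  have qs: "PF (qs k) < m + 1 / (real k + 1)" for k using qs0 by blast
  have dq: "c / 4 * (norm (qs j - qs k))\<^sup>2 < 1 / (real N + 1)" if "j \<ge> N" "k \<ge> N" for j k N
  proof -
    have "m \<le> PF ((1/2) *\<^sub>R qs j + (1/2) *\<^sub>R qs k)" by (rule low)
    also have "\<dots> \<le> (PF (qs j) + PF (qs k)) / 2 - c / 4 * (norm (qs j - qs k))\<^sup>2"
      using PF_mid unfolding c_def by simp
    finally have "c / 4 * (norm (qs j - qs k))\<^sup>2 \<le> (PF (qs j) + PF (qs k)) / 2 - m" by (rule aux_fin)
    also have "\<dots> < (1 / (real j + 1) + 1 / (real k + 1)) / 2" by (rule aux_qs[OF qs[of j] qs[of k]])
    also have "\<dots> \<le> 1 / (real N + 1)"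
      using that by (intro aux_avg) (auto simp: field_simps)
    finally show ?thesis .
  qed
  have "Cauchy qs"
  proof (rule metric_CauchyI)
    fix e :: real assume e: "e > 0"
    obtain N where N: "1 / (real N + 1) < c / 4 * e\<^sup>2"
    proof -
      have "c / 4 * e\<^sup>2 > 0" using c e by simp
      then obtain N where "inverse (real (Suc N)) < c / 4 * e\<^sup>2" using reals_Archimedean by blast
      then show ?thesis using that[of N] by (simp add: inverse_eq_divide add.commute)
    qed
    have "dist (qs j) (qs k) < e" if "j \<ge> N" "k \<ge> N" for j k
    proof -
      have "c / 4 * (norm (qs j - qs k))\<^sup>2 < c / 4 * e\<^sup>2" using dq[OF that] N by simp
      then have "(norm (qs j - qs k))\<^sup>2 < e\<^sup>2" using c by simp
      then show ?thesis using e by (simp add: dist_norm power2_less_imp_less)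
    qed
    then show "\<exists>M. \<forall>m\<ge>M. \<forall>n\<ge>M. dist (qs m) (qs n) < e" by blast
  qed
  then obtain ys where ys: "qs \<longlonglongrightarrow> ys" using Cauchy_convergent convergent_def by blast
  have "(\<lambda>k. PF (qs k)) \<longlonglongrightarrow> PF ys"
    using PF_cont ys by (intro isCont_tendsto_compose[OF _ ys]) (simp add: continuous_on_eq_continuous_at)
  moreover have "(\<lambda>k. PF (qs k)) \<longlonglongrightarrow> m"
  proof (rule tendsto_sandwich[of "\<lambda>_. m" _ _ "\<lambda>k. m + 1 / (real k + 1)"])
    show "\<forall>\<^sub>F n in sequentially. m \<le> PF (qs n)" using low by simp
    show "\<forall>\<^sub>F n in sequentially. PF (qs n) \<le> m + 1 / (real n + 1)" using qs by (simp add: less_imp_le)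
    show "(\<lambda>n. m + 1 / (real n + 1)) \<longlonglongrightarrow> m"
      using tendsto_add[OF tendsto_const LIMSEQ_inverse_real_of_nat_add[of 0]]
      by (simp add: inverse_eq_divide add.commute)
  qed simp
  ultimately have "PF ys = m" using LIMSEQ_unique by blast
  then show ?thesis using low by (intro exI[of _ ys]) simp
qed

lemma PF_min_unique: "\<exists>!y. \<forall>v. PF y \<le> PF v"
proof -
  obtain y where y: "\<forall>v. PF y \<le> PF v" using PF_min_exists by blast
  have "y' = y" if y': "\<forall>v. PF y' \<le> PF v" for y'
  proof -
    have "PF y \<le> PF ((1/2) *\<^sub>R y + (1/2) *\<^sub>R y')" using y by simp
    also have "\<dots> \<le> (PF y + PF y') / 2 - (1 / (2 * lam)) / 4 * (norm (y - y'))\<^sup>2" by (rule PF_mid)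
    finally have "(1 / (2 * lam)) / 4 * (norm (y - y'))\<^sup>2 \<le> 0" using y'[rule_format, of y] by (rule aux_uniq)
    then have "(norm (y - y'))\<^sup>2 \<le> 0" using lam by (simp add: field_simps)
    then show ?thesis by simp
  qed
  then show ?thesis using y by blast
qed

lemma prox_min: "\<forall>v. PF (prox lam f x) \<le> PF v"
proof -
  have "prox lam f x = (THE y. \<forall>v. PF y \<le> PF v)" unfolding prox_def PF_def by simp
  then show ?thesis using theI'[OF PF_min_unique] by simp
qed

lemma prox_sub: "f q \<ge> f (prox lam f x) + inner (x - prox lam f x) (q - prox lam f x) / lam"
proof -
  let ?y = "prox lam f x"
  define c where "c = 1 / (2 * lam)"
  have c: "c > 0" using lam by (simp add: c_def)
  have "f ?y \<le> (f q - 2 * c * inner (q - ?y) (x - ?y)) + t * (c * (norm (q - ?y))\<^sup>2)" if t: "0 < t" "t \<le> 1" for t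
  proof -
    have 1: "PF ?y \<le> PF ((1 - t) *\<^sub>R ?y + t *\<^sub>R q)" using prox_min by simp
    have 2: "f ((1 - t) *\<^sub>R ?y + t *\<^sub>R q) \<le> (1 - t) * f ?y + t * f q"
      using t by (intro convex_onD[OF cv]) auto
    have eqn: "x - ((1 - t) *\<^sub>R ?y + t *\<^sub>R q) = (x - ?y) - t *\<^sub>R (q - ?y)" by (simp add: algebra_simps)
    have 3: "(norm (x - ((1 - t) *\<^sub>R ?y + t *\<^sub>R q)))\<^sup>2 = (norm (x - ?y))\<^sup>2 - 2 * t * inner (q - ?y) (x - ?y) + t\<^sup>2 * (norm (q - ?y))\<^sup>2"
      by (subst eqn) (rule norm_diff_scale_sq)
    have "t * f ?y \<le> t * ((f q - 2 * c * inner (q - ?y) (x - ?y)) + t * (c * (norm (q - ?y))\<^sup>2))"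
      by (rule aux_sub[OF 1[unfolded PF_def c_def[symmetric]] 2 3])
    then show ?thesis using t by simp
  qed
  then have "f ?y \<le> f q - 2 * c * inner (q - ?y) (x - ?y)"
    by (rule eps_le) (use c in \<open>auto intro!: mult_nonneg_nonneg\<close>)
  moreover have "2 * c * inner (q - ?y) (x - ?y) = inner (x - ?y) (q - ?y) / lam"
    using lam by (simp add: c_def inner_commute)
  ultimately show ?thesis by simp
qed

end

lemma prox_lip:
  fixes f :: "'a::{real_inner,complete_space} \<Rightarrow> real"
  assumes cont: "continuous_on UNIV f" and cv: "convex_on UNIV f" and lam: "lam > 0" and mu: "mu > 0"
  shows "norm (prox lam f v - prox mu f v') \<le> norm (v - v') + \<bar>lam / mu - 1\<bar> * norm (v' - prox mu f v')"
proof -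
  define y where "y = prox lam f v"
  define y' where "y' = prox mu f v'"
  define D where "D = y - y'"
  define c where "c = lam / mu"
  have s1: "f y' \<ge> f y + inner (v - y) (y' - y) / lam" unfolding y_def by (rule prox_sub[OF cont cv lam])
  have s2: "f y \<ge> f y' + inner (v' - y') (y - y') / mu" unfolding y'_def by (rule prox_sub[OF cont cv mu])
  have h1: "inner (v - y) (y' - y) / lam + inner (v' - y') (y - y') / mu \<le> 0" using s1 s2 by argo
  have "lam * (inner (v - y) (y' - y) / lam + inner (v' - y') (y - y') / mu) = inner (v - y) (y' - y) + c * inner (v' - y') (y - y')"
    using lam mu by (simp add: c_def field_simps)
  moreover have "lam * (inner (v - y) (y' - y) / lam + inner (v' - y') (y - y') / mu) \<le> 0"
    using h1 lam by (simp add: mult_nonneg_nonpos)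
  ultimately have h2: "inner (v - y) (y' - y) + c * inner (v' - y') D \<le> 0" unfolding D_def by simp
  have e1: "y' - y = - D" and e2: "v - y = (v - v') + (v' - y') - D" unfolding D_def by simp_all
  have h3: "inner (v - y) (y' - y) = - (inner (v - v') D + inner (v' - y') D - inner D D)"
    unfolding e1 e2 by (simp only: inner_add_left inner_diff_left inner_minus_right)
  have h4: "inner D D \<le> inner (v - v') D + (1 - c) * inner (v' - y') D"
    using h2 h3 by (simp add: algebra_simps)
  have h5: "inner (v - v') D \<le> norm (v - v') * norm D" by (rule norm_cauchy_schwarz)
  have "(1 - c) * inner (v' - y') D \<le> \<bar>1 - c\<bar> * \<bar>inner (v' - y') D\<bar>"
    by (metis abs_ge_self abs_mult)
  also have "\<dots> \<le> \<bar>1 - c\<bar> * (norm (v' - y') * norm D)"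
    by (intro mult_left_mono Cauchy_Schwarz_ineq2) simp
  finally have h6: "(1 - c) * inner (v' - y') D \<le> \<bar>1 - c\<bar> * norm (v' - y') * norm D" by simp
  have "(norm D)\<^sup>2 \<le> (norm (v - v') + \<bar>1 - c\<bar> * norm (v' - y')) * norm D"
    using h4 h5 h6 by (simp add: power2_norm_eq_inner[symmetric] algebra_simps)
  then have "norm D \<le> norm (v - v') + \<bar>1 - c\<bar> * norm (v' - y')"
    by (cases "norm D = 0") (auto simp: power2_eq_square)
  moreover have "\<bar>1 - c\<bar> = \<bar>lam / mu - 1\<bar>" unfolding c_def by simp
  ultimately show ?thesis unfolding D_def y_def y'_def by simp
qed

lemma xu_lemma:
  fixes a c r :: "nat \<Rightarrow> real"
  assumes a0: "\<And>n. a n \<ge> 0"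
    and c: "\<And>n. n \<ge> N0 \<Longrightarrow> 0 < c n \<and> c n \<le> 1"
    and rec: "\<And>n. n \<ge> N0 \<Longrightarrow> a (Suc n) \<le> (1 - c n) * a n + r n"
    and ns: "\<not> summable c"
    and rc: "(\<lambda>n. r n / c n) \<longlonglongrightarrow> 0"
  shows "a \<longlonglongrightarrow> 0"
proof (rule LIMSEQ_I)
  fix eps :: real assume eps: "eps > 0"
  define e where "e = eps / 2"
  have e: "e > 0" using eps by (simp add: e_def)
  have "\<forall>\<^sub>F n in sequentially. r n / c n < e" using order_tendstoD(2)[OF rc e] .
  then obtain N1 where N1: "\<And>n. n \<ge> N1 \<Longrightarrow> r n / c n < e" by (auto simp: eventually_sequentially)
  define N where "N = max N0 N1"
  have rN: "r n \<le> e * c n" if "n \<ge> N" for n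
  proof -
    have "r n / c n < e" using N1 that by (simp add: N_def)
    moreover have "c n > 0" using c that by (simp add: N_def)
    ultimately show ?thesis by (simp add: divide_less_eq less_imp_le mult.commute)
  qed
  define b where "b n = max (a n - e) 0" for n
  have b0: "b n \<ge> 0" for n by (simp add: b_def)
  have brec: "b (Suc n) \<le> (1 - c n) * b n" if "n \<ge> N" for n
  proof -
    have cn: "0 < c n" "c n \<le> 1" using c that by (auto simp: N_def)
    have "a (Suc n) - e \<le> (1 - c n) * a n + e * c n - e" using rec[of n] rN[OF that] that by (simp add: N_def)
    also have "\<dots> = (1 - c n) * (a n - e)" by (simp add: algebra_simps)
    also have "\<dots> \<le> (1 - c n) * b n" using cn by (intro mult_left_mono) (auto simp: b_def)
    finally have 1: "a (Suc n) - e \<le> (1 - c n) * b n" .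
    have 2: "0 \<le> (1 - c n) * b n" using cn b0 by simp
    show ?thesis using 1 2 by (simp add: b_def)
  qed
  have bdec: "b (Suc n) \<le> b n" if "n \<ge> N" for n
  proof -
    have "(1 - c n) * b n \<le> b n" using c[of n] that b0[of n] by (simp add: N_def algebra_simps)
    then show ?thesis using brec[OF that] by simp
  qed
  have "\<exists>n\<ge>N. b n < e"
  proof (rule ccontr)
    assume "\<not> (\<exists>n\<ge>N. b n < e)"
    then have be: "b n \<ge> e" if "n \<ge> N" for n using that by force
    have ind: "b (N + k) \<le> b N - e * (\<Sum>j<k. c (j + N))" for k
    proof (induction k)
      case 0 then show ?case by simp
    next
      case (Suc k)
      have "b (N + Suc k) \<le> (1 - c (N + k)) * b (N + k)" using brec[of "N + k"] by simp
      also have "\<dots> = b (N + k) - c (N + k) * b (N + k)" by (simp add: algebra_simps)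
      also have "\<dots> \<le> b (N + k) - c (N + k) * e"
        using be[of "N + k"] c[of "N + k"] by (simp add: N_def)
      also have "\<dots> \<le> b N - e * (\<Sum>j<k. c (j + N)) - c (N + k) * e" using Suc.IH by simp
      also have "\<dots> = b N - e * (\<Sum>j<Suc k. c (j + N))" by (simp add: algebra_simps)
      finally show ?case .
    qed
    have "summable (\<lambda>j. c (j + N))"
    proof (rule summableI_nonneg_bounded)
      show "0 \<le> c (j + N)" for j proof - have "N0 \<le> j + N" unfolding N_def by linarith then show ?thesis using c[of "j + N"] by simp qed
      show "(\<Sum>j<k. c (j + N)) \<le> b N / e" for k
        using ind[of k] b0[of "N + k"] e by (simp add: field_simps)
    qed
    then have "summable c" by simp
    then show False using ns by simp
  qed
  then obtain n0 where n0: "n0 \<ge> N" "b n0 < e" by blast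
  have "b m \<le> b n0" if "m \<ge> n0" for m
    using that
  proof (induction m rule: dec_induct)
    case base then show ?case by simp
  next
    case (step m) then show ?case using bdec[of m] n0 by simp
  qed
  then have "norm (a m - 0) < eps" if "m \<ge> n0" for m
    using that n0 a0[of m] by (fastforce simp: b_def e_def)
  then show "\<exists>no. \<forall>n\<ge>no. norm (a n - 0) < eps" by blast
qed

lemma sq_le:
  fixes a b e R E :: real
  assumes "0 \<le> a" "a \<le> b + e" "0 \<le> b" "b \<le> R" "0 \<le> e" "e \<le> E"
  shows "a\<^sup>2 \<le> b\<^sup>2 + e * (2 * R + E)"
proof -
  have "a\<^sup>2 \<le> (b + e)\<^sup>2" using assms by (intro power_mono) auto
  also have "\<dots> = b\<^sup>2 + e * (2 * b + e)" by (simp add: power2_eq_square algebra_simps)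
  also have "\<dots> \<le> b\<^sup>2 + e * (2 * R + E)" using assms by (intro add_left_mono mult_left_mono) auto
  finally show ?thesis .
qed

lemma unif_bound:
  fixes g :: "nat \<Rightarrow> nat \<Rightarrow> real"
  assumes "finite I" "\<And>i. i \<in> I \<Longrightarrow> \<exists>B. \<forall>n. g i n \<le> B"
  shows "\<exists>B. \<forall>i\<in>I. \<forall>n. g i n \<le> B"
  using assms
proof (induction I rule: finite_induct)
  case empty then show ?case by simp
next
  case (insert j I)
  obtain B1 where B1: "\<forall>i\<in>I. \<forall>n. g i n \<le> B1" using insert by blast
  obtain B2 where B2: "\<forall>n. g j n \<le> B2" using insert by blast
  show ?case using B1 B2 by (intro exI[of _ "max B1 B2"]) (auto simp: le_max_iff_disj)
qed

lemma unif_bound_ge: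
  fixes g :: "nat \<Rightarrow> nat \<Rightarrow> real"
  assumes "finite I" "\<And>i. i \<in> I \<Longrightarrow> \<exists>B. \<forall>n\<ge>N. g i n \<le> B"
  shows "\<exists>B. \<forall>i\<in>I. \<forall>n\<ge>N. g i n \<le> B"
  using assms
proof (induction I rule: finite_induct)
  case empty then show ?case by simp
next
  case (insert j I)
  obtain B1 where B1: "\<forall>i\<in>I. \<forall>n\<ge>N. g i n \<le> B1" using insert by blast
  obtain B2 where B2: "\<forall>n\<ge>N. g j n \<le> B2" using insert by blast
  show ?case using B1 B2 by (intro exI[of _ "max B1 B2"]) (auto simp: le_max_iff_disj)
qed

lemma unif_const:
  fixes g :: "nat \<Rightarrow> real"
  assumes "finite I"
  shows "\<exists>B. \<forall>i\<in>I. g i \<le> B"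
  using unif_bound[OF assms, of "\<lambda>i n. g i"] by auto

lemma g1: fixes A0 A1 l :: real assumes "0 < A1" "0 < l"
  shows "(1 / l) * \<bar>1 - A0 / A1\<bar> * l = \<bar>A1 - A0\<bar> / A1"
proof -
  have "1 - A0 / A1 = (A1 - A0) / A1" using assms by (simp add: field_simps)
  then show ?thesis using assms by simp
qed
lemma g2: fixes th A1 l :: real assumes "0 < A1" "0 < l"
  shows "th / (A1 * l) * l = th / A1"
  using assms by simp
lemma g3: fixes A1 l0 l1 :: real assumes "0 < A1" "0 < l0" "0 < l1"
  shows "(1 / A1) * \<bar>1 / l1 - 1 / l0\<bar> * (l0 * l1) = \<bar>l0 - l1\<bar> / A1"
proof -
  have "1 / l1 - 1 / l0 = (l0 - l1) / (l0 * l1)" using assms by (simp add: field_simps)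
  then have "\<bar>1 / l1 - 1 / l0\<bar> = \<bar>l0 - l1\<bar> / (l0 * l1)" using assms by (simp add: abs_mult)
  then show ?thesis using assms by simp
qed
lemma g4: fixes A1 l0 l1 :: real assumes "0 < A1" "0 < l0" "0 < l1"
  shows "(1 / A1) * \<bar>1 / l1 - 1 / l0\<bar> * l1 = \<bar>l1 / l0 - 1\<bar> / A1"
proof -
  have "1 / l1 - 1 / l0 = (l0 - l1) / (l0 * l1)" using assms by (simp add: field_simps)
  then have "\<bar>1 / l1 - 1 / l0\<bar> = \<bar>l0 - l1\<bar> / (l0 * l1)" using assms by (simp add: abs_mult)
  moreover have "l1 / l0 - 1 = - ((l0 - l1) / l0)" using assms by (simp add: field_simps)
  then have "\<bar>l1 / l0 - 1\<bar> = \<bar>l0 - l1\<bar> / l0" using assms by simp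
  ultimately show ?thesis using assms by simp
qed

theorem lemma4:
  fixes M :: nat
    and f h :: "nat \<Rightarrow> 'a::{real_inner, complete_space} \<Rightarrow> real"
    and gh :: "nat \<Rightarrow> 'a \<Rightarrow> 'a"
    and T :: "nat \<Rightarrow> 'a \<Rightarrow> 'a"
    and L :: "nat \<Rightarrow> real"
    and \<theta> lam \<beta> \<alpha> :: "nat \<Rightarrow> real"
    and x :: "nat \<Rightarrow> 'a"
    and u :: "nat \<Rightarrow> 'a"
    and w z d y :: "nat \<Rightarrow> nat \<Rightarrow> 'a"
  assumes M_pos: "M \<ge> 1"
    \<comment> \<open>(A1)\<close>
    and A1: "\<And>i. i \<in> {1..M} \<Longrightarrow> continuous_on UNIV (f i) \<and> convex_on UNIV (f i)"
    \<comment> \<open>(A2): gh i is the gradient of h i, (1/L i)-Lipschitz\<close>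
    and A2_convex: "\<And>i. i \<in> {1..M} \<Longrightarrow> convex_on UNIV (h i)"
    and A2_grad: "\<And>i p. i \<in> {1..M} \<Longrightarrow> (h i has_derivative (\<lambda>v. inner (gh i p) v)) (at p)"
    and A2_L: "\<And>i. i \<in> {1..M} \<Longrightarrow> L i > 0"
    and A2_lip: "\<And>i p q. i \<in> {1..M} \<Longrightarrow> norm (gh i p - gh i q) \<le> (1 / L i) * norm (p - q)"
    \<comment> \<open>(A3)\<close>
    and A3: "\<And>i. i \<in> {1..M} \<Longrightarrow> firmly_nonexpansive (T i)"
    \<comment> \<open>(A4)\<close>
    and A4_S: "(\<Inter>i\<in>{1..M}. Fix (T i)) \<noteq> {}"
    and A4_Omega: "\<exists>p\<in>(\<Inter>i\<in>{1..M}. Fix (T i)). \<forall>q\<in>(\<Inter>i\<in>{1..M}. Fix (T i)).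
                     (\<Sum>i=1..M. f i p + h i p) \<le> (\<Sum>i=1..M. f i q + h i q)"
    \<comment> \<open>Condition (C): sequences indexed from n = 1\<close>
    and C_dec: "\<And>n. n \<ge> 1 \<Longrightarrow> \<theta> (Suc n) \<le> \<theta> n \<and> lam (Suc n) \<le> lam n
                                \<and> \<beta> (Suc n) \<le> \<beta> n \<and> \<alpha> (Suc n) \<le> \<alpha> n"
    and C_lim: "\<theta> \<longlonglongrightarrow> 0" "lam \<longlonglongrightarrow> 0" "\<beta> \<longlonglongrightarrow> 0" "\<alpha> \<longlonglongrightarrow> 0"
    and C_theta: "\<And>n. n \<ge> 1 \<Longrightarrow> 0 \<le> \<theta> n \<and> \<theta> n < 1"
    and C_lambda: "\<And>n. n \<ge> 1 \<Longrightarrow> 0 < lam n \<and> lam n \<le> 2 * Min (L ` {1..M})"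
    and C_beta: "\<And>n. n \<ge> 1 \<Longrightarrow> 0 < \<beta> n \<and> \<beta> n \<le> 1"
    and C_alpha: "\<And>n. n \<ge> 1 \<Longrightarrow> 0 < \<alpha> n \<and> \<alpha> n \<le> 1"
    and C1: "\<not> summable \<alpha>"
    and C2: "(\<lambda>n. (1 / \<alpha> (Suc n)) * \<bar>1 / lam (Suc n) - 1 / lam n\<bar>) \<longlonglongrightarrow> 0"
    and C3: "(\<lambda>n. (1 / lam (Suc n)) * \<bar>1 - \<alpha> n / \<alpha> (Suc n)\<bar>) \<longlonglongrightarrow> 0"
    and C4: "(\<lambda>n. \<alpha> n / lam n) \<longlonglongrightarrow> 0"
    and C5: "(\<lambda>n. \<theta> n / (\<alpha> (Suc n) * lam (Suc n))) \<longlonglongrightarrow> 0"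
    and C6: "\<exists>\<sigma>\<ge>1. \<forall>n\<ge>1. lam n / lam (Suc n) \<le> \<sigma>"
    and C7: "(\<lambda>n. \<beta> n / \<alpha> (Suc n)) \<longlonglongrightarrow> 0"
    \<comment> \<open>The algorithm (x 1, w i 0, z i 0, u i arbitrary initial data)\<close>
    and alg_d1: "\<And>i. i \<in> {1..M} \<Longrightarrow> d i 1 = - gh i (z i 0)"
    and alg_w1: "\<And>n. n \<ge> 1 \<Longrightarrow> w 1 n = x n"
    and alg_z: "\<And>i n. i \<in> {1..M} \<Longrightarrow> n \<ge> 1 \<Longrightarrow>
                  z i n = w i n + \<theta> n *\<^sub>R (w i n - w i (n - 1))"
    and alg_d: "\<And>i n. i \<in> {1..M} \<Longrightarrow> n \<ge> 1 \<Longrightarrow>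
                  d i (Suc n) = - gh i (z i n) + \<beta> n *\<^sub>R d i n"
    and alg_y: "\<And>i n. i \<in> {1..M} \<Longrightarrow> n \<ge> 1 \<Longrightarrow>
                  y i n = prox (lam n) (f i) (z i n + lam n *\<^sub>R d i (Suc n))"
    and alg_w: "\<And>i n. i \<in> {1..M} \<Longrightarrow> n \<ge> 1 \<Longrightarrow>
                  w (Suc i) n = \<alpha> n *\<^sub>R u i + (1 - \<alpha> n) *\<^sub>R T i (y i n)"
    and alg_x: "\<And>n. n \<ge> 1 \<Longrightarrow> x (Suc n) = w (Suc M) n"
    \<comment> \<open>boundedness of the y-sequences\<close>
    and y_bdd: "\<And>i. i \<in> {1..M} \<Longrightarrow> bounded (y i ` {1..})"
  shows "\<forall>i\<in>{1..M}.
           (\<lambda>n. norm (z i n - y i n)) \<longlonglongrightarrow> 0 \<and>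
           (\<lambda>n. norm (x n - w i n)) \<longlonglongrightarrow> 0 \<and>
           (\<lambda>n. norm (x n - z i n)) \<longlonglongrightarrow> 0 \<and>
           (\<lambda>n. norm (T i (x n) - x n)) \<longlonglongrightarrow> 0"
proof -
  define I where "I = {1..M}"
  have finI: "finite I" by (simp add: I_def)
  have lampos: "0 < lam n" if "n \<ge> 1" for n using C_lambda[OF that] by blast
  have alpos: "0 < \<alpha> n" "\<alpha> n \<le> 1" if "n \<ge> 1" for n using C_alpha[OF that] by auto
  have thpos: "0 \<le> \<theta> n" "\<theta> n < 1" if "n \<ge> 1" for n using C_theta[OF that] by auto
  have bepos: "0 < \<beta> n" "\<beta> n \<le> 1" if "n \<ge> 1" for n using C_beta[OF that] by auto
  have lam_le1: "lam n \<le> lam 1" if "n \<ge> 1" for n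
    using that
  proof (induction n rule: dec_induct)
    case base then show ?case by simp
  next
    case (step n) then show ?case using C_dec[of n] by simp
  qed
  have lamL: "lam n \<le> 2 * L i" if "i \<in> I" "n \<ge> 1" for i n
  proof -
    have "Min (L ` {1..M}) \<le> L i" using that(1) by (intro Min_le) (auto simp: I_def)
    then show ?thesis using C_lambda[OF that(2)] by linarith
  qed
  have ne: "norm (T i a - T i b) \<le> norm (a - b)" if "i \<in> I" for i a b
  proof -
    have "(norm (T i a - T i b))\<^sup>2 \<le> inner (T i a - T i b) (a - b)"
      using A3[of i] that unfolding firmly_nonexpansive_def I_def by blast
    also have "\<dots> \<le> norm (T i a - T i b) * norm (a - b)" by (rule norm_cauchy_schwarz)
    finally have "norm (T i a - T i b) * norm (T i a - T i b) \<le> norm (T i a - T i b) * norm (a - b)"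
      by (simp add: power2_eq_square)
    then show ?thesis
      by (cases "norm (T i a - T i b) = 0") auto
  qed
  obtain p where p0: "p \<in> (\<Inter>i\<in>{1..M}. Fix (T i))" using A4_S by blast
  have p: "T i p = p" if "i \<in> I" for i using p0 that by (auto simp: Fix_def I_def)
  have fejT: "(norm (T i q - p))\<^sup>2 \<le> (norm (q - p))\<^sup>2 - (norm (T i q - q))\<^sup>2" if "i \<in> I" for i q
  proof -
    have 1: "(norm (T i q - p))\<^sup>2 \<le> inner (T i q - p) (q - p)"
      using A3[of i] that p[OF that] unfolding firmly_nonexpansive_def I_def by metis
    have "T i q - q = (T i q - p) - (q - p)" by simp
    then have 2: "(norm (T i q - q))\<^sup>2 = (norm (T i q - p))\<^sup>2 - 2 * inner (T i q - p) (q - p) + (norm (q - p))\<^sup>2"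
      by (simp add: power2_norm_eq_inner inner_diff_left inner_diff_right inner_commute)
    show ?thesis using 1 2 by argo
  qed
  have "\<exists>B. \<forall>n\<ge>1. norm (y i n) \<le> B" if iI: "i \<in> I" for i
  proof -
    obtain B where "\<forall>v\<in>y i ` {1..}. norm v \<le> B" using y_bdd[of i] iI unfolding I_def bounded_iff by blast
    then show ?thesis by auto
  qed
  then obtain By where By: "\<And>i n. i \<in> I \<Longrightarrow> n \<ge> 1 \<Longrightarrow> norm (y i n) \<le> By"
    using unif_bound_ge[OF finI, where g="\<lambda>i n. norm (y i n)" and N=1] by blast
  obtain BT0 where BT0: "\<And>i. i \<in> I \<Longrightarrow> norm (T i 0) \<le> BT0" using unif_const[OF finI, of "\<lambda>i. norm (T i 0)"] by blast
  obtain Bu where Bu: "\<And>i. i \<in> I \<Longrightarrow> norm (u i) \<le> Bu" using unif_const[OF finI, of "\<lambda>i. norm (u i)"] by blast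
  obtain B0 where B0: "\<And>i. i \<in> I \<Longrightarrow> norm (w i 0) \<le> B0" using unif_const[OF finI, of "\<lambda>i. norm (w i 0)"] by blast
  obtain G0 where G0: "\<And>i. i \<in> I \<Longrightarrow> norm (gh i 0) \<le> G0" using unif_const[OF finI, of "\<lambda>i. norm (gh i 0)"] by blast
  obtain Li where Li: "\<And>i. i \<in> I \<Longrightarrow> 1 / L i \<le> Li" using unif_const[OF finI, of "\<lambda>i. 1 / L i"] by blast
  define BT where "BT = BT0 + By"
  have BTy: "norm (T i (y i n)) \<le> BT" if "i \<in> I" "n \<ge> 1" for i n
  proof -
    have "norm (T i (y i n)) \<le> norm (T i (y i n) - T i 0) + norm (T i 0)" using norm_triangle_ineq2[of "T i (y i n)" "T i 0"] by linarith
    also have "\<dots> \<le> norm (y i n) + BT0" using ne[OF that(1), of "y i n" 0] BT0[OF that(1)] by simp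
    finally show ?thesis using By[OF that] by (simp add: BT_def)
  qed
  have MI: "M \<in> I" using M_pos by (simp add: I_def)
  have wS: "norm (w (Suc i) n) \<le> Bu + BT" if "i \<in> I" "n \<ge> 1" for i n
  proof -
    have "norm (w (Suc i) n) \<le> norm (\<alpha> n *\<^sub>R u i) + norm ((1 - \<alpha> n) *\<^sub>R T i (y i n))"
      unfolding alg_w[OF that[unfolded I_def]] by (rule norm_triangle_ineq)
    also have "\<dots> = \<alpha> n * norm (u i) + (1 - \<alpha> n) * norm (T i (y i n))" using alpos[OF that(2)] by simp
    also have "\<dots> \<le> \<alpha> n * Bu + (1 - \<alpha> n) * BT"
      using alpos[OF that(2)] Bu[OF that(1)] BTy[OF that] by (intro add_mono mult_left_mono) auto
    also have "\<dots> \<le> Bu + BT"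
    proof -
      have "0 \<le> Bu" using Bu[OF that(1)] norm_ge_zero order_trans by blast
      moreover have "0 \<le> BT" using BTy[OF that] norm_ge_zero order_trans by blast
      ultimately have "\<alpha> n * Bu \<le> Bu" "(1 - \<alpha> n) * BT \<le> BT"
        using alpos[OF that(2)] by (auto intro!: mult_left_le_one_le)
      then show ?thesis by linarith
    qed
    finally show ?thesis .
  qed
  define Bx where "Bx = max (norm (x 1)) (Bu + BT)"
  have Bxn: "norm (x n) \<le> Bx" if "n \<ge> 1" for n
  proof (cases n)
    case 0 then show ?thesis using that by simp
  next
    case (Suc m)
    show ?thesis
    proof (cases "m = 0")
      case True then show ?thesis using Suc by (simp add: Bx_def)
    next
      case False
      then have "x n = w (Suc M) m" using alg_x[of m] Suc by simp
      then show ?thesis using wS[OF MI, of m] False by (simp add: Bx_def)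
    qed
  qed
  define BW where "BW = max Bx B0"
  have BWn: "norm (w i n) \<le> BW" if iI: "i \<in> I" for i n
  proof (cases "n = 0")
    case True then show ?thesis using B0[OF iI] by (simp add: BW_def)
  next
    case False
    then have n1: "n \<ge> 1" by simp
    show ?thesis
    proof (cases "i = 1")
      case True then show ?thesis using alg_w1[OF n1] Bxn[OF n1] by (simp add: BW_def)
    next
      case False
      then obtain j where j: "i = Suc j" "j \<in> I" using iI by (cases i) (auto simp: I_def)
      then show ?thesis using wS[OF j(2) n1] by (simp add: BW_def Bx_def)
    qed
  qed
  have BW0: "0 \<le> BW" using BWn[OF MI, of 0] norm_ge_zero[of "w M 0"] by linarith
  have zeq: "z i n - w i n = \<theta> n *\<^sub>R (w i n - w i (n - 1))" if "i \<in> I" "n \<ge> 1" for i n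
    using alg_z[of i n] that by (simp add: I_def)
  have zw: "norm (z i n - w i n) \<le> \<theta> n * (2 * BW)" if "i \<in> I" "n \<ge> 1" for i n
  proof -
    have "norm (w i n - w i (n - 1)) \<le> norm (w i n) + norm (w i (n - 1))" by (rule norm_triangle_ineq4)
    also have "\<dots> \<le> 2 * BW" using BWn[OF that(1), of n] BWn[OF that(1), of "n - 1"] by simp
    finally show ?thesis using zeq[OF that] thpos[OF that(2)] by (simp add: mult_left_mono)
  qed
  define BZ where "BZ = 3 * BW"
  have BZn: "norm (z i n) \<le> BZ" if "i \<in> I" "n \<ge> 1" for i n
  proof -
    have "norm (z i n) \<le> norm (w i n) + norm (z i n - w i n)" using norm_triangle_ineq2[of "z i n" "w i n"] by linarith
    also have "\<dots> \<le> BW + 2 * BW"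
    proof -
      have "\<theta> n * (2 * BW) \<le> 2 * BW" using thpos[OF that(2)] BW0 by (intro mult_left_le_one_le) auto
      then show ?thesis using BWn[OF that(1), of n] zw[OF that] by linarith
    qed
    finally show ?thesis by (simp add: BZ_def)
  qed
  define G where "G = G0 + Li * BZ"
  have Gn: "norm (gh i (z i n)) \<le> G" if "i \<in> I" "n \<ge> 1" for i n
  proof -
    have "norm (gh i (z i n)) \<le> norm (gh i (z i n) - gh i 0) + norm (gh i 0)" using norm_triangle_ineq2[of "gh i (z i n)" "gh i 0"] by linarith
    also have "\<dots> \<le> (1 / L i) * norm (z i n) + G0"
      using A2_lip[of i "z i n" 0] G0[OF that(1)] that(1) by (simp add: I_def)
    also have "\<dots> \<le> Li * BZ + G0"
    proof -
      have "(1 / L i) * norm (z i n) \<le> Li * norm (z i n)" using Li[OF that(1)] norm_ge_zero by (rule mult_right_mono)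
      also have "\<dots> \<le> Li * BZ"
      proof -
        have "0 \<le> 1 / L i" using A2_L[of i] that(1) by (simp add: I_def)
        then have "0 \<le> Li" using Li[OF that(1)] by linarith
        then show ?thesis using BZn[OF that] by (simp add: mult_left_mono)
      qed
      finally show ?thesis by simp
    qed
    finally show ?thesis by (simp add: G_def)
  qed
  have G0le: "0 \<le> G" using Gn[OF MI, of 1] norm_ge_zero[of "gh M (z M 1)"] by linarith
  have "\<exists>B. \<forall>n\<ge>1. norm (d i n) \<le> B" if iI: "i \<in> I" for i
  proof -
    have "\<forall>\<^sub>F n in sequentially. \<beta> n < 1/2" by (rule order_tendstoD(2)[OF C_lim(3)]) simp
    then obtain N0 where N0: "\<And>n. n \<ge> N0 \<Longrightarrow> \<beta> n < 1/2" by (auto simp: eventually_sequentially)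
    define N where "N = max N0 1"
    define K where "K = max (2 * G) (Max ((\<lambda>k. norm (d i k)) ` {1..N}))"
    have "norm (d i n) \<le> K" if "n \<ge> 1" for n
      using that
    proof (induction n rule: dec_induct)
      case base
      have "1 \<in> {1..N}" by (simp add: N_def)
      then have "norm (d i 1) \<le> Max ((\<lambda>k. norm (d i k)) ` {1..N})" by (intro Max_ge) auto
      then show ?case unfolding K_def by linarith
    next
      case (step n)
      show ?case
      proof (cases "Suc n \<le> N")
        case True
        then have "Suc n \<in> {1..N}" by simp
        then have "norm (d i (Suc n)) \<le> Max ((\<lambda>k. norm (d i k)) ` {1..N})" by (intro Max_ge) auto
        then show ?thesis unfolding K_def by linarith
      next
        case False
        then have nN: "n \<ge> N0" "n \<ge> 1" by (auto simp: N_def)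
        have "norm (d i (Suc n)) \<le> norm (gh i (z i n)) + norm (\<beta> n *\<^sub>R d i n)"
          unfolding alg_d[OF iI[unfolded I_def] nN(2)] using norm_triangle_ineq[of "- gh i (z i n)" "\<beta> n *\<^sub>R d i n"] by simp
        also have "\<dots> \<le> G + (1/2) * K"
        proof -
          have "norm (\<beta> n *\<^sub>R d i n) = \<beta> n * norm (d i n)" using bepos[OF nN(2)] by simp
          also have "\<dots> \<le> (1/2) * K"
          proof (rule mult_mono)
            show "\<beta> n \<le> 1/2" using N0[OF nN(1)] by simp
            show "norm (d i n) \<le> K" by (rule step.IH)
          qed simp_all
          finally show ?thesis using Gn[OF iI nN(2)] by simp
        qed
        also have "\<dots> \<le> K"
        proof -
          have "2 * G \<le> K" unfolding K_def by simp
          then show ?thesis by linarith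
        qed
        finally show ?thesis .
      qed
    qed
    then show ?thesis by blast
  qed
  then obtain Bd where Bd: "\<And>i n. i \<in> I \<Longrightarrow> n \<ge> 1 \<Longrightarrow> norm (d i n) \<le> Bd"
    using unif_bound_ge[OF finI, where g="\<lambda>i n. norm (d i n)" and N=1] by blast
  have Bd0: "0 \<le> Bd" using Bd[OF MI, of 1] norm_ge_zero[of "d M 1"] by linarith
  define v where "v i n = z i n + lam n *\<^sub>R d i (Suc n)" for i n
  have fcont: "continuous_on UNIV (f i)" "convex_on UNIV (f i)" if "i \<in> I" for i
    using A1[of i] that by (auto simp: I_def)
  have yprox: "y i n = prox (lam n) (f i) (v i n)" if "i \<in> I" "n \<ge> 1" for i n
    using alg_y[of i n] that by (simp add: v_def I_def)
  have lam1: "0 < lam 1" using lampos[of 1] by simp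
  define Bv where "Bv = BZ + lam 1 * Bd + By"
  have vd: "norm (v i n - z i n) \<le> lam n * Bd" if "i \<in> I" "n \<ge> 1" for i n
    using Bd[OF that(1), of "Suc n"] lampos[OF that(2)] that(2)
    by (simp add: v_def mult_left_mono)
  have lamBd: "lam n * Bd \<le> lam 1 * Bd" if "n \<ge> 1" for n
    using lam_le1[OF that] Bd0 by (simp add: mult_right_mono)
  have Bvn: "norm (v i n - y i n) \<le> Bv" if "i \<in> I" "n \<ge> 1" for i n
  proof -
    have "norm (v i n - y i n) \<le> norm (v i n - z i n) + norm (z i n) + norm (y i n)"
      using norm_triangle_ineq4[of "v i n" "y i n"] norm_triangle_ineq[of "v i n - z i n" "z i n"] by simp
    then show ?thesis using vd[OF that] lamBd[OF that(2)] BZn[OF that] By[OF that] by (simp add: Bv_def)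
  qed
  have "\<exists>B. \<forall>n\<ge>1. f i p - f i (y i n) \<le> B" if iI: "i \<in> I" for i
  proof -
    obtain a b where ab: "b \<ge> 0" "\<And>q. a - b * norm q \<le> f i q"
      using convex_lower_linear[OF fcont[OF iI]] by blast
    have "f i p - f i (y i n) \<le> f i p - a + b * By" if "n \<ge> 1" for n
    proof -
      have "b * norm (y i n) \<le> b * By" using By[OF iI that] ab(1) by (rule mult_left_mono)
      then show ?thesis using ab(2)[of "y i n"] by linarith
    qed
    then show ?thesis by blast
  qed
  then obtain Bf where Bf: "\<And>i n. i \<in> I \<Longrightarrow> n \<ge> 1 \<Longrightarrow> f i p - f i (y i n) \<le> Bf"
    using unif_bound_ge[OF finI, where g="\<lambda>i n. f i p - f i (y i n)" and N=1] by blast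
  define P where "P = norm p"
  define K1 where "K1 = 2 * BW * (2 * (BW + P) + 2 * BW)"
  define K2 where "K2 = Bd * (2 * (BZ + P) + lam 1 * Bd) + Bd * (2 * Bv + lam 1 * Bd) + 2 * Bf"
  define K3 where "K3 = (Bu + P) * (2 * (BT + P) + (Bu + P))"
  define eps where "eps n = \<theta> n * K1 + lam n * K2 + \<alpha> n * K3" for n
  have fej: "(norm (w (Suc i) n - p))\<^sup>2 \<le> (norm (w i n - p))\<^sup>2 - (norm (z i n - y i n))\<^sup>2 - (norm (T i (y i n) - y i n))\<^sup>2 + eps n"
    if iI: "i \<in> I" and n1: "n \<ge> 1" for i n
  proof -
    have P0: "0 \<le> P" by (simp add: P_def)
    have Bu0: "0 \<le> Bu" using Bu[OF iI] norm_ge_zero[of "u i"] by linarith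
    have BT0': "0 \<le> BT" using BTy[OF iI n1] norm_ge_zero[of "T i (y i n)"] by linarith
    have Bv0: "0 \<le> Bv" using Bvn[OF iI n1] norm_ge_zero[of "v i n - y i n"] by linarith
    have a: "(norm (z i n - p))\<^sup>2 \<le> (norm (w i n - p))\<^sup>2 + \<theta> n * K1"
    proof -
      have 1: "norm (z i n - p) \<le> norm (w i n - p) + \<theta> n * (2 * BW)"
        using norm_triangle_ineq[of "w i n - p" "z i n - w i n"] zw[OF iI n1] by simp
      have 2: "norm (w i n - p) \<le> BW + P"
        using norm_triangle_ineq4[of "w i n" p] BWn[OF iI, of n] by (simp add: P_def)
      have 3: "\<theta> n * (2 * BW) \<le> 2 * BW" using thpos[OF n1] BW0 by (intro mult_left_le_one_le) auto
      have "(norm (z i n - p))\<^sup>2 \<le> (norm (w i n - p))\<^sup>2 + (\<theta> n * (2 * BW)) * (2 * (BW + P) + 2 * BW)"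
        by (rule sq_le[OF norm_ge_zero 1 norm_ge_zero 2 _ 3]) (use thpos[OF n1] BW0 in simp)
      then show ?thesis by (simp add: K1_def mult.assoc)
    qed
    have b: "(norm (v i n - p))\<^sup>2 \<le> (norm (z i n - p))\<^sup>2 + lam n * (Bd * (2 * (BZ + P) + lam 1 * Bd))"
    proof -
      have 1: "norm (v i n - p) \<le> norm (z i n - p) + lam n * Bd"
        using norm_triangle_ineq[of "z i n - p" "v i n - z i n"] vd[OF iI n1] by simp
      have 2: "norm (z i n - p) \<le> BZ + P"
        using norm_triangle_ineq4[of "z i n" p] BZn[OF iI n1] by (simp add: P_def)
      have "(norm (v i n - p))\<^sup>2 \<le> (norm (z i n - p))\<^sup>2 + (lam n * Bd) * (2 * (BZ + P) + lam 1 * Bd)"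
        by (rule sq_le[OF norm_ge_zero 1 norm_ge_zero 2 _ lamBd[OF n1]]) (use lampos[OF n1] Bd0 in simp)
      then show ?thesis by (simp add: mult.assoc mult.left_commute)
    qed
    have c: "(norm (z i n - y i n))\<^sup>2 \<le> (norm (v i n - y i n))\<^sup>2 + lam n * (Bd * (2 * Bv + lam 1 * Bd))"
    proof -
      have 1: "norm (z i n - y i n) \<le> norm (v i n - y i n) + lam n * Bd"
        using norm_triangle_ineq[of "v i n - y i n" "z i n - v i n"] vd[OF iI n1]
        by (simp add: norm_minus_commute)
      have "(norm (z i n - y i n))\<^sup>2 \<le> (norm (v i n - y i n))\<^sup>2 + (lam n * Bd) * (2 * Bv + lam 1 * Bd)"
        by (rule sq_le[OF norm_ge_zero 1 norm_ge_zero Bvn[OF iI n1] _ lamBd[OF n1]]) (use lampos[OF n1] Bd0 in simp)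
      then show ?thesis by (simp add: mult.assoc mult.left_commute)
    qed
    have d: "(norm (y i n - p))\<^sup>2 \<le> (norm (v i n - p))\<^sup>2 - (norm (v i n - y i n))\<^sup>2 + lam n * (2 * Bf)"
    proof -
      have ps: "f i p \<ge> f i (y i n) + inner (v i n - y i n) (p - y i n) / lam n"
        unfolding yprox[OF iI n1] by (rule prox_sub[OF fcont[OF iI] lampos[OF n1]])
      then have "inner (v i n - y i n) (p - y i n) / lam n \<le> Bf" using Bf[OF iI n1] by linarith
      then have I1: "inner (v i n - y i n) (p - y i n) \<le> Bf * lam n"
        using lampos[OF n1] by (simp add: pos_divide_le_eq)
      have "v i n - p = (v i n - y i n) - (p - y i n)" by simp
      then have "(norm (v i n - p))\<^sup>2 = (norm (v i n - y i n))\<^sup>2 - 2 * inner (v i n - y i n) (p - y i n) + (norm (p - y i n))\<^sup>2"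
        using norm_diff_scale_sq[of "v i n - y i n" 1 "p - y i n"] by (simp add: inner_commute)
      then show ?thesis using I1 by (simp add: norm_minus_commute algebra_simps)
    qed
    have e: "(norm (T i (y i n) - p))\<^sup>2 \<le> (norm (y i n - p))\<^sup>2 - (norm (T i (y i n) - y i n))\<^sup>2"
      by (rule fejT[OF iI])
    have f: "(norm (w (Suc i) n - p))\<^sup>2 \<le> (norm (T i (y i n) - p))\<^sup>2 + \<alpha> n * K3"
    proof -
      have eq: "w (Suc i) n - p = \<alpha> n *\<^sub>R (u i - p) + (1 - \<alpha> n) *\<^sub>R (T i (y i n) - p)"
        using alg_w[of i n] iI n1 by (simp add: I_def algebra_simps)
      have "norm (w (Suc i) n - p) \<le> \<alpha> n * norm (u i - p) + (1 - \<alpha> n) * norm (T i (y i n) - p)"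
        unfolding eq using norm_triangle_ineq[of "\<alpha> n *\<^sub>R (u i - p)" "(1 - \<alpha> n) *\<^sub>R (T i (y i n) - p)"] alpos[OF n1]
        by simp
      also have "\<dots> \<le> norm (T i (y i n) - p) + \<alpha> n * (Bu + P)"
      proof -
        have "norm (u i - p) \<le> Bu + P" using norm_triangle_ineq4[of "u i" p] Bu[OF iI] by (simp add: P_def)
        then have "\<alpha> n * norm (u i - p) \<le> \<alpha> n * (Bu + P)" using alpos[OF n1] by (simp add: mult_left_mono)
        moreover have "(1 - \<alpha> n) * norm (T i (y i n) - p) \<le> norm (T i (y i n) - p)"
          using alpos[OF n1] by (simp add: mult_left_le_one_le)
        ultimately show ?thesis by linarith
      qed
      finally have 1: "norm (w (Suc i) n - p) \<le> norm (T i (y i n) - p) + \<alpha> n * (Bu + P)" .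
      have 2: "norm (T i (y i n) - p) \<le> BT + P"
        using norm_triangle_ineq4[of "T i (y i n)" p] BTy[OF iI n1] by (simp add: P_def)
      have 3: "\<alpha> n * (Bu + P) \<le> Bu + P" using alpos[OF n1] Bu0 P0 by (intro mult_left_le_one_le) auto
      have "(norm (w (Suc i) n - p))\<^sup>2 \<le> (norm (T i (y i n) - p))\<^sup>2 + (\<alpha> n * (Bu + P)) * (2 * (BT + P) + (Bu + P))"
        by (rule sq_le[OF norm_ge_zero 1 norm_ge_zero 2 _ 3]) (use alpos[OF n1] Bu0 P0 in simp)
      then show ?thesis by (simp add: K3_def mult.assoc)
    qed
    have "lam n * K2 = lam n * (Bd * (2 * (BZ + P) + lam 1 * Bd)) + lam n * (Bd * (2 * Bv + lam 1 * Bd)) + lam n * (2 * Bf)"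
      by (simp add: K2_def algebra_simps)
    then show ?thesis using a b c d e f unfolding eps_def by linarith
  qed
  define e where "e n = (Bu + BT) * \<bar>\<alpha> (Suc n) - \<alpha> n\<bar> + 4 * BW * \<theta> n + G * \<bar>lam n - lam (Suc n)\<bar>
      + 2 * lam 1 * Bd * \<beta> n + Bv * \<bar>lam (Suc n) / lam n - 1\<bar>" for n
  have Bu0: "0 \<le> Bu" using Bu[OF MI] norm_ge_zero[of "u M"] by linarith
  have BTn0: "0 \<le> BT" using BTy[OF MI, of 1] norm_ge_zero[of "T M (y M 1)"] by linarith
  have Bv0: "0 \<le> Bv" using Bvn[OF MI, of 1] norm_ge_zero[of "v M 1 - y M 1"] by linarith
  have e0: "0 \<le> e n" if "n \<ge> 1" for n
    unfolding e_def using Bu0 BTn0 BW0 G0le Bd0 Bv0 lam1 thpos[OF that] bepos[OF that] by simp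
  have vexp: "v i k = (z i k - lam k *\<^sub>R gh i (z i k)) + (lam k * \<beta> k) *\<^sub>R d i k" if "i \<in> I" "k \<ge> 1" for i k
  proof -
    have dd: "d i (Suc k) = - gh i (z i k) + \<beta> k *\<^sub>R d i k" using alg_d[of i k] that by (simp add: I_def)
    show ?thesis unfolding v_def dd by (simp add: algebra_simps)
  qed
  have stepE: "norm (w (Suc i) (Suc n) - w (Suc i) n) \<le> (1 - \<alpha> (Suc n)) * norm (w i (Suc n) - w i n) + e n"
    if iI: "i \<in> I" and n1: "n \<ge> 1" for i n
  proof -
    have N1: "Suc n \<ge> 1" by simp
    have eqw: "w (Suc i) (Suc n) - w (Suc i) n = (\<alpha> (Suc n) - \<alpha> n) *\<^sub>R (u i - T i (y i n)) + (1 - \<alpha> (Suc n)) *\<^sub>R (T i (y i (Suc n)) - T i (y i n))"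
      using alg_w[of i n] alg_w[of i "Suc n"] iI n1 by (simp add: I_def algebra_simps)
    have w1: "norm (w (Suc i) (Suc n) - w (Suc i) n) \<le> \<bar>\<alpha> (Suc n) - \<alpha> n\<bar> * (Bu + BT) + (1 - \<alpha> (Suc n)) * norm (y i (Suc n) - y i n)"
    proof -
      have "norm (w (Suc i) (Suc n) - w (Suc i) n) \<le> norm ((\<alpha> (Suc n) - \<alpha> n) *\<^sub>R (u i - T i (y i n))) + norm ((1 - \<alpha> (Suc n)) *\<^sub>R (T i (y i (Suc n)) - T i (y i n)))"
        unfolding eqw by (rule norm_triangle_ineq)
      also have "\<dots> = \<bar>\<alpha> (Suc n) - \<alpha> n\<bar> * norm (u i - T i (y i n)) + (1 - \<alpha> (Suc n)) * norm (T i (y i (Suc n)) - T i (y i n))"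
        using alpos[OF N1] by simp
      also have "\<dots> \<le> \<bar>\<alpha> (Suc n) - \<alpha> n\<bar> * (Bu + BT) + (1 - \<alpha> (Suc n)) * norm (y i (Suc n) - y i n)"
      proof (rule add_mono)
        have "norm (u i - T i (y i n)) \<le> Bu + BT"
          using norm_triangle_ineq4[of "u i" "T i (y i n)"] Bu[OF iI] BTy[OF iI n1] by linarith
        then show "\<bar>\<alpha> (Suc n) - \<alpha> n\<bar> * norm (u i - T i (y i n)) \<le> \<bar>\<alpha> (Suc n) - \<alpha> n\<bar> * (Bu + BT)"
          by (simp add: mult_left_mono)
        show "(1 - \<alpha> (Suc n)) * norm (T i (y i (Suc n)) - T i (y i n)) \<le> (1 - \<alpha> (Suc n)) * norm (y i (Suc n) - y i n)"
          using alpos[OF N1] ne[OF iI] by (simp add: mult_left_mono)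
      qed
      finally show ?thesis .
    qed
    have y1: "norm (y i (Suc n) - y i n) \<le> norm (v i (Suc n) - v i n) + \<bar>lam (Suc n) / lam n - 1\<bar> * Bv"
    proof -
      have "norm (y i (Suc n) - y i n) \<le> norm (v i (Suc n) - v i n) + \<bar>lam (Suc n) / lam n - 1\<bar> * norm (v i n - y i n)"
        unfolding yprox[OF iI n1] yprox[OF iI N1]
        by (rule prox_lip[OF fcont[OF iI] lampos[OF N1] lampos[OF n1]])
      also have "\<dots> \<le> norm (v i (Suc n) - v i n) + \<bar>lam (Suc n) / lam n - 1\<bar> * Bv"
        using Bvn[OF iI n1] by (simp add: mult_left_mono)
      finally show ?thesis .
    qed
    have v1: "norm (v i (Suc n) - v i n) \<le> norm (z i (Suc n) - z i n) + G * \<bar>lam n - lam (Suc n)\<bar> + 2 * lam 1 * Bd * \<beta> n"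
    proof -
      define g where "g = gh i"
      have eqv: "v i (Suc n) - v i n = ((z i (Suc n) - lam (Suc n) *\<^sub>R g (z i (Suc n))) - (z i n - lam (Suc n) *\<^sub>R g (z i n)))
         + (lam n - lam (Suc n)) *\<^sub>R g (z i n) + ((lam (Suc n) * \<beta> (Suc n)) *\<^sub>R d i (Suc n) - (lam n * \<beta> n) *\<^sub>R d i n)"
        unfolding vexp[OF iI n1] vexp[OF iI N1] g_def by (simp add: algebra_simps)
      have t1: "norm ((z i (Suc n) - lam (Suc n) *\<^sub>R g (z i (Suc n))) - (z i n - lam (Suc n) *\<^sub>R g (z i n))) \<le> norm (z i (Suc n) - z i n)"
        unfolding g_def
        using grad_step_nonexp[OF A2_convex A2_grad A2_L A2_lip] iI lampos[OF N1] lamL[OF iI N1]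
        by (simp add: I_def less_imp_le)
      have t2: "norm ((lam n - lam (Suc n)) *\<^sub>R g (z i n)) \<le> G * \<bar>lam n - lam (Suc n)\<bar>"
        using mult_right_mono[OF Gn[OF iI n1] abs_ge_zero[of "lam n - lam (Suc n)"]] unfolding g_def by (simp add: mult.commute)
      have t3: "norm ((lam (Suc n) * \<beta> (Suc n)) *\<^sub>R d i (Suc n) - (lam n * \<beta> n) *\<^sub>R d i n) \<le> 2 * lam 1 * Bd * \<beta> n"
      proof -
        have b1: "\<beta> (Suc n) \<le> \<beta> n" using C_dec[OF n1] by simp
        have "norm ((lam (Suc n) * \<beta> (Suc n)) *\<^sub>R d i (Suc n)) \<le> lam 1 * Bd * \<beta> n"
        proof -
          have "norm ((lam (Suc n) * \<beta> (Suc n)) *\<^sub>R d i (Suc n)) = lam (Suc n) * \<beta> (Suc n) * norm (d i (Suc n))"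
            using lampos[OF N1] bepos[OF N1] by simp
          also have "\<dots> \<le> lam 1 * \<beta> n * Bd"
            using lam_le1[OF N1] b1 Bd[OF iI N1] lampos[OF N1] bepos[OF N1]
            by (intro mult_mono) auto
          finally show ?thesis by (simp add: mult_ac)
        qed
        moreover have "norm ((lam n * \<beta> n) *\<^sub>R d i n) \<le> lam 1 * Bd * \<beta> n"
        proof -
          have "norm ((lam n * \<beta> n) *\<^sub>R d i n) = lam n * \<beta> n * norm (d i n)"
            using lampos[OF n1] bepos[OF n1] by simp
          also have "\<dots> \<le> lam 1 * \<beta> n * Bd"
            using lam_le1[OF n1] Bd[OF iI n1] lampos[OF n1] bepos[OF n1]
            by (intro mult_mono) auto
          finally show ?thesis by (simp add: mult_ac)
        qed
        ultimately show ?thesis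
          using norm_triangle_ineq4[of "(lam (Suc n) * \<beta> (Suc n)) *\<^sub>R d i (Suc n)" "(lam n * \<beta> n) *\<^sub>R d i n"] by linarith
      qed
      show ?thesis unfolding eqv
        using norm_triangle_ineq[of "((z i (Suc n) - lam (Suc n) *\<^sub>R g (z i (Suc n))) - (z i n - lam (Suc n) *\<^sub>R g (z i n))) + (lam n - lam (Suc n)) *\<^sub>R g (z i n)"
           "(lam (Suc n) * \<beta> (Suc n)) *\<^sub>R d i (Suc n) - (lam n * \<beta> n) *\<^sub>R d i n"]
          norm_triangle_ineq[of "((z i (Suc n) - lam (Suc n) *\<^sub>R g (z i (Suc n))) - (z i n - lam (Suc n) *\<^sub>R g (z i n)))" "(lam n - lam (Suc n)) *\<^sub>R g (z i n)"]
          t1 t2 t3 by linarith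
    qed
    have z1: "norm (z i (Suc n) - z i n) \<le> norm (w i (Suc n) - w i n) + 4 * BW * \<theta> n"
    proof -
      have eqz: "z i (Suc n) - z i n = (w i (Suc n) - w i n) + ((z i (Suc n) - w i (Suc n)) - (z i n - w i n))" by simp
      have "norm (z i (Suc n) - w i (Suc n)) \<le> \<theta> (Suc n) * (2 * BW)" by (rule zw[OF iI N1])
      also have "\<dots> \<le> \<theta> n * (2 * BW)" using C_dec[OF n1] BW0 by (simp add: mult_right_mono)
      finally have 1: "norm (z i (Suc n) - w i (Suc n)) \<le> \<theta> n * (2 * BW)" .
      have 2: "norm (z i n - w i n) \<le> \<theta> n * (2 * BW)" by (rule zw[OF iI n1])
      have "\<theta> n * (2 * BW) + \<theta> n * (2 * BW) = 4 * BW * \<theta> n" by simp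
      show ?thesis unfolding eqz
        using norm_triangle_ineq[of "w i (Suc n) - w i n" "(z i (Suc n) - w i (Suc n)) - (z i n - w i n)"]
          norm_triangle_ineq4[of "z i (Suc n) - w i (Suc n)" "z i n - w i n"] 1 2
          \<open>\<theta> n * (2 * BW) + \<theta> n * (2 * BW) = 4 * BW * \<theta> n\<close> by linarith
    qed
    have yb: "norm (y i (Suc n) - y i n) \<le> norm (w i (Suc n) - w i n) + (4 * BW * \<theta> n + G * \<bar>lam n - lam (Suc n)\<bar> + 2 * lam 1 * Bd * \<beta> n + Bv * \<bar>lam (Suc n) / lam n - 1\<bar>)"
      using y1 v1 z1 by (simp add: mult.commute)
    define X where "X = 4 * BW * \<theta> n + G * \<bar>lam n - lam (Suc n)\<bar> + 2 * lam 1 * Bd * \<beta> n + Bv * \<bar>lam (Suc n) / lam n - 1\<bar>"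
    have X0: "0 \<le> X" unfolding X_def using BW0 G0le Bd0 Bv0 lam1 thpos[OF n1] bepos[OF n1] by simp
    have "(1 - \<alpha> (Suc n)) * norm (y i (Suc n) - y i n) \<le> (1 - \<alpha> (Suc n)) * (norm (w i (Suc n) - w i n) + X)"
      using yb alpos[OF N1] unfolding X_def by (simp add: mult_left_mono)
    also have "\<dots> \<le> (1 - \<alpha> (Suc n)) * norm (w i (Suc n) - w i n) + X"
      using alpos[OF N1] X0 by (simp add: algebra_simps mult_left_le_one_le)
    finally have "(1 - \<alpha> (Suc n)) * norm (y i (Suc n) - y i n) \<le> (1 - \<alpha> (Suc n)) * norm (w i (Suc n) - w i n) + X" .
    then show ?thesis using w1 unfolding e_def X_def by (simp add: mult.commute)
  qed
  have I1: "1 \<in> I" using M_pos by (simp add: I_def)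
  have chain: "norm (w (Suc k) (Suc n) - w (Suc k) n) \<le> (1 - \<alpha> (Suc n)) * norm (x (Suc n) - x n) + real k * e n"
    if n1: "n \<ge> 1" and k: "1 \<le> k" "k \<le> M" for k n
    using k(1)
  proof (induction k rule: dec_induct)
    case base
    have "w 1 (Suc n) = x (Suc n)" "w 1 n = x n" using alg_w1[of "Suc n"] alg_w1[OF n1] by simp_all
    then show ?case using stepE[OF I1 n1] by simp
  next
    case (step m)
    have mI: "Suc m \<in> I" using step.hyps k(2) by (simp add: I_def)
    have E0: "0 \<le> norm (w (Suc m) (Suc n) - w (Suc m) n)" by simp
    have "(1 - \<alpha> (Suc n)) * norm (w (Suc m) (Suc n) - w (Suc m) n) \<le> norm (w (Suc m) (Suc n) - w (Suc m) n)"
      using alpos[of "Suc n"] E0 by (intro mult_left_le_one_le) auto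
    then show ?case using stepE[OF mI n1] step.IH by (simp add: algebra_simps)
  qed
  define a where "a n = norm (x (Suc n) - x n)" for n
  have arec: "a (Suc n) \<le> (1 - \<alpha> (Suc n)) * a n + real M * e n" if n1: "n \<ge> 1" for n
  proof -
    have "w (Suc M) (Suc n) = x (Suc (Suc n))" "w (Suc M) n = x (Suc n)" using alg_x[of "Suc n"] alg_x[OF n1] by simp_all
    then show ?thesis using chain[OF n1 M_pos order_refl] by (simp add: a_def)
  qed
  have lamS: "(\<lambda>n. lam (Suc n)) \<longlonglongrightarrow> 0" using LIMSEQ_Suc[OF C_lim(2)] .
  have t1: "(\<lambda>n. \<bar>\<alpha> (Suc n) - \<alpha> n\<bar> / \<alpha> (Suc n)) \<longlonglongrightarrow> 0"
  proof -
    have "(\<lambda>n. (1 / lam (Suc n)) * \<bar>1 - \<alpha> n / \<alpha> (Suc n)\<bar> * lam (Suc n)) \<longlonglongrightarrow> 0 * 0"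
      by (rule tendsto_mult[OF C3 lamS])
    moreover have "(1 / lam (Suc n)) * \<bar>1 - \<alpha> n / \<alpha> (Suc n)\<bar> * lam (Suc n) = \<bar>\<alpha> (Suc n) - \<alpha> n\<bar> / \<alpha> (Suc n)" for n
      by (rule g1) (use alpos[of "Suc n"] lampos[of "Suc n"] in auto)
    ultimately show ?thesis by simp
  qed
  have t2: "(\<lambda>n. \<theta> n / \<alpha> (Suc n)) \<longlonglongrightarrow> 0"
  proof -
    have "(\<lambda>n. \<theta> n / (\<alpha> (Suc n) * lam (Suc n)) * lam (Suc n)) \<longlonglongrightarrow> 0 * 0"
      by (rule tendsto_mult[OF C5 lamS])
    moreover have "\<theta> n / (\<alpha> (Suc n) * lam (Suc n)) * lam (Suc n) = \<theta> n / \<alpha> (Suc n)" for n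
      by (rule g2) (use alpos[of "Suc n"] lampos[of "Suc n"] in auto)
    ultimately show ?thesis by simp
  qed
  have t3: "(\<lambda>n. \<bar>lam n - lam (Suc n)\<bar> / \<alpha> (Suc n)) \<longlonglongrightarrow> 0"
  proof -
    have "(\<lambda>n. (1 / \<alpha> (Suc n)) * \<bar>1 / lam (Suc n) - 1 / lam n\<bar> * (lam n * lam (Suc n))) \<longlonglongrightarrow> 0 * (0 * 0)"
      by (rule tendsto_mult[OF C2 tendsto_mult[OF C_lim(2) lamS]])
    moreover have "\<forall>\<^sub>F n in sequentially. (1 / \<alpha> (Suc n)) * \<bar>1 / lam (Suc n) - 1 / lam n\<bar> * (lam n * lam (Suc n)) = \<bar>lam n - lam (Suc n)\<bar> / \<alpha> (Suc n)"
      unfolding eventually_sequentially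
      by (intro exI[of _ 1] allI impI g3) (use alpos lampos in auto)
    ultimately show ?thesis using Lim_transform_eventually by fastforce
  qed
  have t5: "(\<lambda>n. \<bar>lam (Suc n) / lam n - 1\<bar> / \<alpha> (Suc n)) \<longlonglongrightarrow> 0"
  proof -
    have "(\<lambda>n. (1 / \<alpha> (Suc n)) * \<bar>1 / lam (Suc n) - 1 / lam n\<bar> * lam (Suc n)) \<longlonglongrightarrow> 0 * 0"
      by (rule tendsto_mult[OF C2 lamS])
    moreover have "\<forall>\<^sub>F n in sequentially. (1 / \<alpha> (Suc n)) * \<bar>1 / lam (Suc n) - 1 / lam n\<bar> * lam (Suc n) = \<bar>lam (Suc n) / lam n - 1\<bar> / \<alpha> (Suc n)"
      unfolding eventually_sequentially
      by (intro exI[of _ 1] allI impI g4) (use alpos lampos in auto)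
    ultimately show ?thesis using Lim_transform_eventually by fastforce
  qed
  have rc: "(\<lambda>n. real M * e n / \<alpha> (Suc n)) \<longlonglongrightarrow> 0"
  proof -
    have eq: "real M * e n / \<alpha> (Suc n) = real M * ((Bu + BT) * (\<bar>\<alpha> (Suc n) - \<alpha> n\<bar> / \<alpha> (Suc n)) + 4 * BW * (\<theta> n / \<alpha> (Suc n))
        + G * (\<bar>lam n - lam (Suc n)\<bar> / \<alpha> (Suc n)) + 2 * lam 1 * Bd * (\<beta> n / \<alpha> (Suc n)) + Bv * (\<bar>lam (Suc n) / lam n - 1\<bar> / \<alpha> (Suc n)))" for n
      unfolding e_def using alpos[of "Suc n"] by (simp add: field_simps)
    have "(\<lambda>n. real M * ((Bu + BT) * (\<bar>\<alpha> (Suc n) - \<alpha> n\<bar> / \<alpha> (Suc n)) + 4 * BW * (\<theta> n / \<alpha> (Suc n))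
        + G * (\<bar>lam n - lam (Suc n)\<bar> / \<alpha> (Suc n)) + 2 * lam 1 * Bd * (\<beta> n / \<alpha> (Suc n)) + Bv * (\<bar>lam (Suc n) / lam n - 1\<bar> / \<alpha> (Suc n))))
       \<longlonglongrightarrow> real M * ((Bu + BT) * 0 + 4 * BW * 0 + G * 0 + 2 * lam 1 * Bd * 0 + Bv * 0)"
      by (intro tendsto_intros t1 t2 t3 C7 t5)
    then show ?thesis unfolding eq by simp
  qed
  have a0: "a \<longlonglongrightarrow> 0"
  proof (rule xu_lemma[where c="\<lambda>n. \<alpha> (Suc n)" and r="\<lambda>n. real M * e n"])
    show "0 \<le> a n" for n by (simp add: a_def)
    show "0 < \<alpha> (Suc n) \<and> \<alpha> (Suc n) \<le> 1" if "n \<ge> 1" for n using alpos[of "Suc n"] by simp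
    show "a (Suc n) \<le> (1 - \<alpha> (Suc n)) * a n + real M * e n" if "n \<ge> 1" for n by (rule arec[OF that])
    show "\<not> summable (\<lambda>n. \<alpha> (Suc n))" using C1 summable_iff_shift[of \<alpha> 1] by simp
    show "(\<lambda>n. real M * e n / \<alpha> (Suc n)) \<longlonglongrightarrow> 0" by (rule rc)
  qed
  have eps0: "eps \<longlonglongrightarrow> 0"
  proof -
    have "(\<lambda>n. \<theta> n * K1 + lam n * K2 + \<alpha> n * K3) \<longlonglongrightarrow> 0 * K1 + 0 * K2 + 0 * K3"
      by (intro tendsto_intros C_lim)
    then show ?thesis unfolding eps_def by simp
  qed
  define S where "S i n = (norm (z i n - y i n))\<^sup>2 + (norm (T i (y i n) - y i n))\<^sup>2" for i n
  have S0: "0 \<le> S i n" for i n by (simp add: S_def)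
  have Sbound: "S i n \<le> 2 * (Bx + P) * a n + real M * eps n" if iI: "i \<in> I" and n1: "n \<ge> 1" for i n
  proof -
    have fc: "k \<le> M \<longrightarrow> (norm (w (Suc k) n - p))\<^sup>2 \<le> (norm (x n - p))\<^sup>2 + real k * eps n - (if i \<le> k then S i n else 0)" for k
    proof (induction k)
      case 0
      have "i \<ge> 1" using iI by (simp add: I_def)
      then show ?case using alg_w1[OF n1] by simp
    next
      case (Suc k)
      show ?case
      proof
        assume kM: "Suc k \<le> M"
        have kI: "Suc k \<in> I" using kM by (simp add: I_def)
        have IH: "(norm (w (Suc k) n - p))\<^sup>2 \<le> (norm (x n - p))\<^sup>2 + real k * eps n - (if i \<le> k then S i n else 0)"
          using Suc.IH kM by simp
        have F: "(norm (w (Suc (Suc k)) n - p))\<^sup>2 \<le> (norm (w (Suc k) n - p))\<^sup>2 - S (Suc k) n + eps n"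
          using fej[OF kI n1] by (simp add: S_def)
        show "(norm (w (Suc (Suc k)) n - p))\<^sup>2 \<le> (norm (x n - p))\<^sup>2 + real (Suc k) * eps n - (if i \<le> Suc k then S i n else 0)"
        proof (cases "i \<le> k")
          case True then show ?thesis using IH F S0[of "Suc k" n] by (simp add: algebra_simps)
        next
          case False
          show ?thesis
          proof (cases "i = Suc k")
            case True then show ?thesis using IH F False by (simp add: algebra_simps)
          next
            case False2: False
            then have "\<not> i \<le> Suc k" using False by simp
            then show ?thesis using IH F False S0[of "Suc k" n] by (simp add: algebra_simps)
          qed
        qed
      qed
    qed
    have iM: "i \<le> M" using iI by (simp add: I_def)
    have "(norm (x (Suc n) - p))\<^sup>2 \<le> (norm (x n - p))\<^sup>2 + real M * eps n - S i n"
      using fc[of M] alg_x[OF n1] iM by simp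
    moreover have "(norm (x n - p))\<^sup>2 - (norm (x (Suc n) - p))\<^sup>2 \<le> 2 * (Bx + P) * a n"
    proof -
      define A where "A = norm (x n - p)"
      define B where "B = norm (x (Suc n) - p)"
      have AB: "A - B \<le> a n"
      proof -
        have "norm (x n - p) - norm (x (Suc n) - p) \<le> norm ((x n - p) - (x (Suc n) - p))" by (rule norm_triangle_ineq2)
        then show ?thesis by (simp add: A_def B_def a_def norm_minus_commute)
      qed
      have A: "A \<le> Bx + P" using norm_triangle_ineq4[of "x n" p] Bxn[OF n1] by (simp add: A_def P_def)
      have B: "B \<le> Bx + P" using norm_triangle_ineq4[of "x (Suc n)" p] Bxn[of "Suc n"] by (simp add: B_def P_def)
      have A0: "0 \<le> A" "0 \<le> B" by (simp_all add: A_def B_def)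
      have "A\<^sup>2 - B\<^sup>2 = (A - B) * (A + B)" by (simp add: power2_eq_square algebra_simps)
      also have "\<dots> \<le> a n * (A + B)" using AB A0 by (intro mult_right_mono) auto
      also have "\<dots> \<le> a n * (2 * (Bx + P))" using A B by (intro mult_left_mono) (auto simp: a_def)
      finally show ?thesis by (simp add: A_def B_def mult_ac)
    qed
    ultimately show ?thesis by linarith
  qed
  have Slim: "(\<lambda>n. sqrt (2 * (Bx + P) * a n + real M * eps n)) \<longlonglongrightarrow> 0"
  proof -
    have "(\<lambda>n. sqrt (2 * (Bx + P) * a n + real M * eps n)) \<longlonglongrightarrow> sqrt (2 * (Bx + P) * 0 + real M * 0)"
      by (intro tendsto_intros a0 eps0)
    then show ?thesis by simp
  qed
  have ZY: "(\<lambda>n. norm (z i n - y i n)) \<longlonglongrightarrow> 0" if iI: "i \<in> I" for i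
  proof (rule Lim_null_comparison[OF _ Slim])
    show "\<forall>\<^sub>F n in sequentially. norm (norm (z i n - y i n)) \<le> sqrt (2 * (Bx + P) * a n + real M * eps n)"
      unfolding eventually_sequentially
    proof (intro exI[of _ 1] allI impI)
      fix n :: nat assume n1: "n \<ge> 1"
      have "(norm (z i n - y i n))\<^sup>2 \<le> 2 * (Bx + P) * a n + real M * eps n"
        using Sbound[OF iI n1] zero_le_power2[of "norm (T i (y i n) - y i n)"] unfolding S_def by linarith
      then show "norm (norm (z i n - y i n)) \<le> sqrt (2 * (Bx + P) * a n + real M * eps n)"
        by (simp add: real_le_rsqrt)
    qed
  qed
  have TY: "(\<lambda>n. norm (T i (y i n) - y i n)) \<longlonglongrightarrow> 0" if iI: "i \<in> I" for i
  proof (rule Lim_null_comparison[OF _ Slim])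
    show "\<forall>\<^sub>F n in sequentially. norm (norm (T i (y i n) - y i n)) \<le> sqrt (2 * (Bx + P) * a n + real M * eps n)"
      unfolding eventually_sequentially
    proof (intro exI[of _ 1] allI impI)
      fix n :: nat assume n1: "n \<ge> 1"
      have "(norm (T i (y i n) - y i n))\<^sup>2 \<le> 2 * (Bx + P) * a n + real M * eps n"
        using Sbound[OF iI n1] zero_le_power2[of "norm (z i n - y i n)"] unfolding S_def by linarith
      then show "norm (norm (T i (y i n) - y i n)) \<le> sqrt (2 * (Bx + P) * a n + real M * eps n)"
        by (simp add: real_le_rsqrt)
    qed
  qed
  have thw: "(\<lambda>n. \<theta> n * (2 * BW)) \<longlonglongrightarrow> 0"
    using tendsto_mult[OF C_lim(1) tendsto_const[of "2 * BW"]] by simp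
  have alB: "(\<lambda>n. \<alpha> n * (BT + Bu)) \<longlonglongrightarrow> 0"
    using tendsto_mult[OF C_lim(4) tendsto_const[of "BT + Bu"]] by simp
  have XW: "(\<lambda>n. norm (x n - w i n)) \<longlonglongrightarrow> 0" if iI: "i \<in> I" for i
  proof -
    have i1: "1 \<le> i" "i \<le> M" using iI by (auto simp: I_def)
    show ?thesis using i1(1) i1(2)
    proof (induction i rule: dec_induct)
      case base
      have "\<forall>n\<ge>1. norm (norm (x n - w 1 n)) \<le> 0" using alg_w1 by simp
      then have "\<forall>\<^sub>F n in sequentially. norm (norm (x n - w 1 n)) \<le> 0"
        unfolding eventually_sequentially by blast
      then show ?case by (rule Lim_null_comparison) simp
    next
      case (step m)
      have mI: "m \<in> I" using step.hyps step.prems by (simp add: I_def)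
      have IH: "(\<lambda>n. norm (x n - w m n)) \<longlonglongrightarrow> 0" using step.IH step.prems by simp
      have lim: "(\<lambda>n. norm (x n - w m n) + \<theta> n * (2 * BW) + norm (z m n - y m n) + norm (T m (y m n) - y m n) + \<alpha> n * (BT + Bu)) \<longlonglongrightarrow> 0 + 0 + 0 + 0 + 0"
        by (intro tendsto_add IH thw ZY[OF mI] TY[OF mI] alB)
      then have lim': "(\<lambda>n. norm (x n - w m n) + \<theta> n * (2 * BW) + norm (z m n - y m n) + norm (T m (y m n) - y m n) + \<alpha> n * (BT + Bu)) \<longlonglongrightarrow> 0"
        by simp
      show ?case
      proof (rule Lim_null_comparison[OF _ lim'])
        show "\<forall>\<^sub>F n in sequentially. norm (norm (x n - w (Suc m) n)) \<le> norm (x n - w m n) + \<theta> n * (2 * BW) + norm (z m n - y m n) + norm (T m (y m n) - y m n) + \<alpha> n * (BT + Bu)"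
          unfolding eventually_sequentially
        proof (intro exI[of _ 1] allI impI)
          fix n :: nat assume n1: "n \<ge> 1"
          have eqw: "T m (y m n) - w (Suc m) n = \<alpha> n *\<^sub>R (T m (y m n) - u m)"
            using alg_w[of m n] mI n1 by (simp add: I_def algebra_simps)
          have 1: "norm (T m (y m n) - w (Suc m) n) \<le> \<alpha> n * (BT + Bu)"
          proof -
            have "norm (T m (y m n) - u m) \<le> BT + Bu" using norm_triangle_ineq4[of "T m (y m n)" "u m"] BTy[OF mI n1] Bu[OF mI] by linarith
            then show ?thesis unfolding eqw using alpos[OF n1] by (simp add: mult_left_mono)
          qed
          have 2: "norm (w m n - z m n) \<le> \<theta> n * (2 * BW)" using zw[OF mI n1] by (simp add: norm_minus_commute)
          define A1 where "A1 = x n - w m n"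
          define A2 where "A2 = w m n - z m n"
          define A3 where "A3 = z m n - y m n"
          define A4 where "A4 = y m n - T m (y m n)"
          define A5 where "A5 = T m (y m n) - w (Suc m) n"
          have eqA: "x n - w (Suc m) n = A1 + A2 + A3 + A4 + A5"
            by (simp add: A1_def A2_def A3_def A4_def A5_def)
          have "norm (x n - w (Suc m) n) \<le> norm A1 + norm A2 + norm A3 + norm A4 + norm A5"
            unfolding eqA using norm_triangle_ineq[of "A1 + A2 + A3 + A4" A5] norm_triangle_ineq[of "A1 + A2 + A3" A4]
              norm_triangle_ineq[of "A1 + A2" A3] norm_triangle_ineq[of A1 A2] by linarith
          then have "norm (x n - w (Suc m) n) \<le> norm (x n - w m n) + norm (w m n - z m n) + norm (z m n - y m n) + norm (y m n - T m (y m n)) + norm (T m (y m n) - w (Suc m) n)"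
            by (simp add: A1_def A2_def A3_def A4_def A5_def)
          then show "norm (norm (x n - w (Suc m) n)) \<le> norm (x n - w m n) + \<theta> n * (2 * BW) + norm (z m n - y m n) + norm (T m (y m n) - y m n) + \<alpha> n * (BT + Bu)"
            using 1 2 by (simp add: norm_minus_commute)
        qed
      qed
    qed
  qed
  show ?thesis
  proof
    fix i assume iI0: "i \<in> {1..M}"
    then have iI: "i \<in> I" by (simp add: I_def)
    have XZ: "(\<lambda>n. norm (x n - z i n)) \<longlonglongrightarrow> 0"
    proof -
      have lim: "(\<lambda>n. norm (x n - w i n) + \<theta> n * (2 * BW)) \<longlonglongrightarrow> 0 + 0"
        by (intro tendsto_add XW[OF iI] thw)
      then have lim': "(\<lambda>n. norm (x n - w i n) + \<theta> n * (2 * BW)) \<longlonglongrightarrow> 0"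
        by simp
      show ?thesis
      proof (rule Lim_null_comparison[OF _ lim'])
        show "\<forall>\<^sub>F n in sequentially. norm (norm (x n - z i n)) \<le> norm (x n - w i n) + \<theta> n * (2 * BW)"
          unfolding eventually_sequentially
        proof (intro exI[of _ 1] allI impI)
          fix n :: nat assume n1: "n \<ge> 1"
          have "norm (x n - z i n) \<le> norm (x n - w i n) + norm (w i n - z i n)"
            using norm_triangle_ineq[of "x n - w i n" "w i n - z i n"] by simp
          then show "norm (norm (x n - z i n)) \<le> norm (x n - w i n) + \<theta> n * (2 * BW)"
            using zw[OF iI n1] by (simp add: norm_minus_commute)
        qed
      qed
    qed
    have TX: "(\<lambda>n. norm (T i (x n) - x n)) \<longlonglongrightarrow> 0"
    proof -
      have lim: "(\<lambda>n. 2 * (norm (x n - z i n) + norm (z i n - y i n)) + norm (T i (y i n) - y i n)) \<longlonglongrightarrow> 2 * (0 + 0) + 0"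
        by (intro tendsto_intros XZ ZY[OF iI] TY[OF iI])
      then have lim': "(\<lambda>n. 2 * (norm (x n - z i n) + norm (z i n - y i n)) + norm (T i (y i n) - y i n)) \<longlonglongrightarrow> 0"
        by simp
      show ?thesis
      proof (rule Lim_null_comparison[OF _ lim'])
        show "\<forall>\<^sub>F n in sequentially. norm (norm (T i (x n) - x n)) \<le> 2 * (norm (x n - z i n) + norm (z i n - y i n)) + norm (T i (y i n) - y i n)"
          unfolding eventually_sequentially
        proof (intro exI[of _ 0] allI impI)
          fix n :: nat assume "n \<ge> 0"
          have xy: "norm (x n - y i n) \<le> norm (x n - z i n) + norm (z i n - y i n)"
            using norm_triangle_ineq[of "x n - z i n" "z i n - y i n"] by simp
          have t: "norm (T i (x n) - T i (y i n)) \<le> norm (x n - y i n)" by (rule ne[OF iI])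
          define A1 where "A1 = T i (x n) - T i (y i n)"
          define A2 where "A2 = T i (y i n) - y i n"
          define A3 where "A3 = y i n - x n"
          have eqA: "T i (x n) - x n = A1 + A2 + A3" by (simp add: A1_def A2_def A3_def)
          have "norm (T i (x n) - x n) \<le> norm A1 + norm A2 + norm A3"
            unfolding eqA using norm_triangle_ineq[of "A1 + A2" A3] norm_triangle_ineq[of A1 A2] by linarith
          then have "norm (T i (x n) - x n) \<le> norm (T i (x n) - T i (y i n)) + norm (T i (y i n) - y i n) + norm (y i n - x n)"
            by (simp add: A1_def A2_def A3_def)
          then show "norm (norm (T i (x n) - x n)) \<le> 2 * (norm (x n - z i n) + norm (z i n - y i n)) + norm (T i (y i n) - y i n)"
            using xy t by (simp add: norm_minus_commute)
        qed
      qed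
    qed
    show "(\<lambda>n. norm (z i n - y i n)) \<longlonglongrightarrow> 0 \<and> (\<lambda>n. norm (x n - w i n)) \<longlonglongrightarrow> 0 \<and>
          (\<lambda>n. norm (x n - z i n)) \<longlonglongrightarrow> 0 \<and> (\<lambda>n. norm (T i (x n) - x n)) \<longlonglongrightarrow> 0"
      using ZY[OF iI] XW[OF iI] XZ TX by blast
  qed
qed

end
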